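(* Let $q$ be a prime power and $r\ge1$ an integer. For every integer $j$ with $0\le j\le q^r+1$ there exists a $q^r$-divisible set of points in a projective space over $\mathbb{F}_q$ of cardinality $$n=\frac{q^{2r}-1}{q-1}+j\cdot\left((q-1)q^r-\frac{q^r-1}{q-1}\right).$$
   Context: Points are $1$-dimensional subspaces of $\mathbb{F}_q^v$. A set $\mathcal{C}$ of points is $\Delta$-divisible if there is an integer $u$ with $|\mathcal{C}\cap H|\equiv u\pmod{\Delta}$ for every hyperplane $H$ of $\mathbb{F}_q^v$, where $\mathcal{C}\cap H$ is the set of points of $\mathcal{C}$ contained in $H$. *)

theory Defs
  imports Main "HOL-Library.Cardinality" "HOL-Number_Theory.Cong"
begin

text \<open>The ambient space F_q^v is modelled as the vectors x :: nat => 'a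
  (with 'a a finite field of order q) whose coordinates vanish outside {0..<v}.\<close>

definition vecs :: "nat \<Rightarrow> (nat \<Rightarrow> 'a::field) set" where
  "vecs v = {x. \<forall>i\<ge>v. x i = 0}"

definition points :: "nat \<Rightarrow> (nat \<Rightarrow> 'a::field) set set" where
  "points v = {{(\<lambda>i. c * x i) | c. True} | x. x \<in> vecs v \<and> x \<noteq> (\<lambda>i. 0)}"

definition hyperplanes :: "nat \<Rightarrow> (nat \<Rightarrow> 'a::field) set set" where
  "hyperplanes v = {{x \<in> vecs v. (\<Sum>i<v. a i * x i) = 0} | a.
                     (\<exists>i<v. a i \<noteq> 0)}"

definition divisible_pts :: "nat \<Rightarrow> nat \<Rightarrow> (nat \<Rightarrow> 'a::field) set set \<Rightarrow> bool" where
  "divisible_pts v \<Delta> C \<longleftrightarrow> C \<subseteq> points v \<and>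
     (\<exists>u::nat. \<forall>H \<in> hyperplanes v. [card {P \<in> C. P \<subseteq> H} = u] (mod \<Delta>))"

end

theory Submission
  imports Defs "HOL-Algebra.Algebraic_Closure_Type"
begin


definition cfs :: "'b::zero set \<Rightarrow> nat \<Rightarrow> (nat \<Rightarrow> 'b) set" where
  "cfs S k = {c. (\<forall>i<k. c i \<in> S) \<and> (\<forall>i\<ge>k. c i = 0)}"

definition lc :: "nat \<Rightarrow> (nat \<Rightarrow> 'b::comm_ring_1) \<Rightarrow> (nat \<Rightarrow> 'b) \<Rightarrow> 'b" where
  "lc k c w = (\<Sum>i<k. c i * w i)"

lemma card_cfs:
  assumes "finite S"
  shows "card (cfs S k) = card S ^ k"
proof -
  have "bij_betw (\<lambda>c. restrict c {..<k}) (cfs S k) (PiE {..<k} (\<lambda>_. S))"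
  proof (rule bij_betw_imageI)
    show "inj_on (\<lambda>c. restrict c {..<k}) (cfs S k)"
    proof (rule inj_onI)
      fix c d assume c: "c \<in> cfs S k" and d: "d \<in> cfs S k"
        and e: "restrict c {..<k} = restrict d {..<k}"
      show "c = d"
      proof
        fix i show "c i = d i"
        proof (cases "i < k")
          case True then show ?thesis using fun_cong[OF e, of i] by simp
        next
          case False then show ?thesis using c d by (simp add: cfs_def)
        qed
      qed
    qed
    show "(\<lambda>c. restrict c {..<k}) ` cfs S k = PiE {..<k} (\<lambda>_. S)"
    proof
      show "(\<lambda>c. restrict c {..<k}) ` cfs S k \<subseteq> PiE {..<k} (\<lambda>_. S)"
        by (rule image_subsetI, unfold restrict_PiE_iff, simp add: cfs_def)
      show "PiE {..<k} (\<lambda>_. S) \<subseteq> (\<lambda>c. restrict c {..<k}) ` cfs S k"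
      proof
        fix f assume f: "f \<in> PiE {..<k} (\<lambda>_. S)"
        let ?c = "\<lambda>i. if i < k then f i else 0"
        have "?c \<in> cfs S k" using f by (auto simp: cfs_def)
        moreover have "restrict ?c {..<k} = f" using f
          by (auto simp: restrict_def PiE_def extensional_def fun_eq_iff)
        ultimately show "f \<in> (\<lambda>c. restrict c {..<k}) ` cfs S k" by (metis (no_types, lifting) image_eqI)
      qed
    qed
  qed
  hence "card (cfs S k) = card (PiE {..<k} (\<lambda>_. S :: 'a set))" by (rule bij_betw_same_card)
  also have "\<dots> = card S ^ k" by (simp add: card_PiE)
  finally show ?thesis .
qed

lemma finite_cfs: "finite S \<Longrightarrow> finite (cfs S k)"
proof -
  assume "finite S"
  have "cfs S k \<subseteq> (\<lambda>f i. if i < k then f i else 0) ` PiE {..<k} (\<lambda>_. S)"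
  proof
    fix c assume c: "c \<in> cfs S k"
    have "restrict c {..<k} \<in> PiE {..<k} (\<lambda>_. S)" using c by (auto simp: cfs_def)
    moreover have "c = (\<lambda>i. if i < k then restrict c {..<k} i else 0)"
      using c by (auto simp: cfs_def fun_eq_iff)
    ultimately show "c \<in> (\<lambda>f i. if i < k then f i else 0) ` PiE {..<k} (\<lambda>_. S)" by blast
  qed
  moreover have "finite (PiE {..<k} (\<lambda>_. S))" using \<open>finite S\<close> by (simp add: finite_PiE)
  ultimately show ?thesis by (meson finite_imageI finite_subset)
qed

locale subfield_set =
  fixes S :: "'b::field set"
  assumes S0: "0 \<in> S" and S1: "1 \<in> S"
    and Sadd: "\<And>x y. x \<in> S \<Longrightarrow> y \<in> S \<Longrightarrow> x + y \<in> S"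
    and Sneg: "\<And>x. x \<in> S \<Longrightarrow> - x \<in> S"
    and Smul: "\<And>x y. x \<in> S \<Longrightarrow> y \<in> S \<Longrightarrow> x * y \<in> S"
    and Sinv: "\<And>x. x \<in> S \<Longrightarrow> inverse x \<in> S"
begin

lemma Sdiff: "x \<in> S \<Longrightarrow> y \<in> S \<Longrightarrow> x - y \<in> S"
  using Sadd Sneg by (metis diff_conv_add_uminus)

lemma Sdiv: "x \<in> S \<Longrightarrow> y \<in> S \<Longrightarrow> x / y \<in> S"
  using Smul Sinv by (simp add: divide_inverse)

lemma lc_Suc: "lc (Suc k) c w = lc k c w + c k * w k"
  by (simp add: lc_def)

lemma lc_cong: "(\<And>i. i < k \<Longrightarrow> c i = c' i) \<Longrightarrow> (\<And>i. i < k \<Longrightarrow> w i = w' i) \<Longrightarrow> lc k c w = lc k c' w'"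
  by (simp add: lc_def)

lemma extend_inj:
  assumes inj: "inj_on (\<lambda>c. lc k c w) (cfs S k)"
    and y: "y \<notin> (\<lambda>c. lc k c w) ` cfs S k"
  shows "inj_on (\<lambda>c. lc (Suc k) c (w(k:=y))) (cfs S (Suc k))"
proof (rule inj_onI)
  fix c c' assume c: "c \<in> cfs S (Suc k)" and c': "c' \<in> cfs S (Suc k)"
    and eq: "lc (Suc k) c (w(k:=y)) = lc (Suc k) c' (w(k:=y))"
  have e1: "lc (Suc k) c (w(k:=y)) = lc k c w + c k * y"
    by (simp add: lc_Suc lc_def)
  have e2: "lc (Suc k) c' (w(k:=y)) = lc k c' w + c' k * y"
    by (simp add: lc_Suc lc_def)
  have ck: "c k = c' k"
  proof (rule ccontr)
    assume ne: "c k \<noteq> c' k"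
    define d where "d = (\<lambda>i. if i < k then (c' i - c i) / (c k - c' k) else 0)"
    have dS: "d \<in> cfs S k"
      using c c' by (auto simp: d_def cfs_def intro!: Sdiv Sdiff)
    have "(c k - c' k) * y = lc k c' w - lc k c w" using eq e1 e2 by (simp add: algebra_simps)
    also have "\<dots> = (\<Sum>i<k. (c' i - c i) * w i)" by (simp add: lc_def sum_subtractf algebra_simps)
    finally have "y = (\<Sum>i<k. (c' i - c i) * w i) / (c k - c' k)"
      using ne by (simp add: field_simps)
    also have "\<dots> = lc k d w" by (simp add: lc_def d_def sum_divide_distrib)
    finally have "y = lc k d w" .
    with dS y show False by blast
  qed
  have "lc k c w = lc k c' w" using eq e1 e2 ck by simp
  moreover have "lc k c w = lc k (c(k:=0)) w" "lc k c' w = lc k (c'(k:=0)) w"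
    by (auto intro: lc_cong)
  moreover have "c(k:=0) \<in> cfs S k" "c'(k:=0) \<in> cfs S k"
    using c c' by (auto simp: cfs_def S0)
  ultimately have "c(k:=0) = c'(k:=0)" using inj by (metis inj_onD)
  then show "c = c'" using ck by (metis fun_upd_triv fun_upd_upd)
qed

lemma lc_in_M:
  assumes M0: "0 \<in> M" and Madd: "\<And>x y. x \<in> M \<Longrightarrow> y \<in> M \<Longrightarrow> x + y \<in> M"
    and Msc: "\<And>a x. a \<in> S \<Longrightarrow> x \<in> M \<Longrightarrow> a * x \<in> M"
    and w: "\<And>i. i < k \<Longrightarrow> w i \<in> M" and c: "\<And>i. i < k \<Longrightarrow> c i \<in> S"
  shows "lc k c w \<in> M"
  using w c
proof (induction k)
  case 0 then show ?case by (simp add: lc_def M0)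
next
  case (Suc k) then show ?case by (simp add: lc_Suc Madd Msc)
qed

theorem span_bij:
  assumes fS: "finite S" and fM: "finite M"
    and M0: "0 \<in> M" and Madd: "\<And>x y. x \<in> M \<Longrightarrow> y \<in> M \<Longrightarrow> x + y \<in> M"
    and Msc: "\<And>a x. a \<in> S \<Longrightarrow> x \<in> M \<Longrightarrow> a * x \<in> M"
  shows "\<exists>k w. bij_betw (\<lambda>c. lc k c w) (cfs S k) M"
proof -
  define N where "N = {k. \<exists>w. (\<forall>i<k. w i \<in> M) \<and> inj_on (\<lambda>c. lc k c w) (cfs S k)}"
  have cardS: "card S \<ge> 2"
  proof -
    have "{0, 1} \<subseteq> S" using S0 S1 by auto
    hence "card {0,1::'b} \<le> card S" using fS by (rule card_mono[rotated])
    thus ?thesis by simp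
  qed
  have bound: "k < card M + 1" if "k \<in> N" for k
  proof -
    from that obtain w where w: "\<forall>i<k. w i \<in> M" and inj: "inj_on (\<lambda>c. lc k c w) (cfs S k)"
      by (auto simp: N_def)
    have sub: "(\<lambda>c. lc k c w) ` cfs S k \<subseteq> M"
      using w by (auto simp: cfs_def intro!: lc_in_M[OF M0 Madd Msc])
    have "card S ^ k = card (cfs S k)" using card_cfs[OF fS] by simp
    also have "\<dots> = card ((\<lambda>c. lc k c w) ` cfs S k)" using inj by (simp add: card_image)
    also have "\<dots> \<le> card M" using sub fM by (simp add: card_mono)
    finally have "2 ^ k \<le> card M" using cardS by (meson order_trans power_mono zero_le_numeral)
    moreover have "k < 2 ^ k" by (rule less_exp)
    ultimately show ?thesis by linarith
  qed
  have fN: "finite N" using bound by (meson finite_lessThan finite_subset lessThan_iff subsetI)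
  have "0 \<in> N" by (auto simp: N_def cfs_def inj_on_def fun_eq_iff)
  define k where "k = Max N"
  have kN: "k \<in> N" using fN \<open>0 \<in> N\<close> unfolding k_def by (metis Max_in empty_iff)
  then obtain w where w: "\<forall>i<k. w i \<in> M" and inj: "inj_on (\<lambda>c. lc k c w) (cfs S k)"
    by (auto simp: N_def)
  have sub: "(\<lambda>c. lc k c w) ` cfs S k \<subseteq> M"
    using w by (auto simp: cfs_def intro!: lc_in_M[OF M0 Madd Msc])
  have "(\<lambda>c. lc k c w) ` cfs S k = M"
  proof (rule ccontr)
    assume "(\<lambda>c. lc k c w) ` cfs S k \<noteq> M"
    with sub obtain y where yM: "y \<in> M" and y: "y \<notin> (\<lambda>c. lc k c w) ` cfs S k" by blast
    have "Suc k \<in> N"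
      unfolding N_def using extend_inj[OF inj y] w yM by (auto intro!: exI[of _ "w(k:=y)"])
    hence "Suc k \<le> k" using fN by (simp add: k_def)
    thus False by simp
  qed
  with inj show ?thesis unfolding bij_betw_def by blast
qed

end


lemma fermat_field: "(x::'a::{finite,field}) ^ CARD('a) = x"
proof (cases "x = 0")
  case True then show ?thesis by (simp add: finite_UNIV_card_ge_0)
next
  case False
  define m where "m = card (UNIV - {0::'a})"
  have m: "CARD('a) = Suc m" unfolding m_def
    using finite_UNIV_card_ge_0[where 'a='a] by (simp add: card_Diff_singleton)
  have h1: "(\<Prod>y\<in>UNIV-{0}. x * y) = (\<Prod>y\<in>UNIV-{0::'a}. y)"
    by (rule prod.reindex_bij_witness[of _ "\<lambda>y. y / x" "\<lambda>y. x * y"]) (use False in auto)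
  have h2: "(\<Prod>y\<in>UNIV-{0}. x * y) = x ^ m * (\<Prod>y\<in>UNIV-{0::'a}. y)"
    unfolding m_def by (simp add: prod.distrib)
  have h3: "(\<Prod>y\<in>UNIV-{0::'a}. y) \<noteq> 0" by simp
  from h1 h2 have "x ^ m * (\<Prod>y\<in>UNIV-{0::'a}. y) = 1 * (\<Prod>y\<in>UNIV-{0::'a}. y)" by simp
  hence "x ^ m = 1" using h3 by (rule mult_right_cancel[THEN iffD1, rotated])
  thus ?thesis unfolding m by simp
qed

lemma fermat_field_pow: "(x::'a::{finite,field}) ^ (CARD('a) ^ n) = x"
  by (induction n) (simp_all add: power_mult fermat_field mult.commute[of "CARD('a)"])

lemma CHAR_finite_field: "CHAR('a::{finite,field}) > 0" "Factorial_Ring.prime CHAR('a::{finite,field})"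
proof -
  show "CHAR('a) > 0" by (rule finite_imp_CHAR_pos) simp
  then show "Factorial_Ring.prime CHAR('a)" by (rule prime_CHAR_semidom)
qed

lemma frob_prime:
  fixes x y :: "'b::comm_ring_1"
  assumes p: "Factorial_Ring.prime CHAR('b)"
  shows "(x + y) ^ CHAR('b) = x ^ CHAR('b) + y ^ CHAR('b)"
proof -
  let ?p = "CHAR('b)"
  have p0: "?p > 0" using p prime_gt_0_nat by blast
  have "(x + y) ^ ?p = (\<Sum>k\<le>?p. of_nat (?p choose k) * x ^ k * y ^ (?p - k))"
    by (rule binomial_ring)
  also have "\<dots> = (\<Sum>k\<in>{0, ?p}. of_nat (?p choose k) * x ^ k * y ^ (?p - k))"
  proof (rule sum.mono_neutral_right)
    show "finite {..?p}" by simp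
    show "{0, ?p} \<subseteq> {..?p}" by auto
    show "\<forall>k\<in>{..?p} - {0, ?p}. of_nat (?p choose k) * x ^ k * y ^ (?p - k) = 0"
    proof
      fix k assume k: "k \<in> {..?p} - {0, ?p}"
      have "?p dvd (?p choose k)" using k p p0 by (intro dvd_choose_prime) auto
      hence "of_nat (?p choose k) = (0::'b)" by (simp add: of_nat_eq_0_iff_char_dvd)
      thus "of_nat (?p choose k) * x ^ k * y ^ (?p - k) = 0" by simp
    qed
  qed
  also have "\<dots> = x ^ ?p + y ^ ?p" using p0 by (simp add: add.commute)
  finally show ?thesis .
qed

lemma frob_prime_pow:
  fixes x y :: "'b::comm_ring_1"
  assumes p: "Factorial_Ring.prime CHAR('b)"
  shows "(x + y) ^ (CHAR('b) ^ n) = x ^ (CHAR('b) ^ n) + y ^ (CHAR('b) ^ n)"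
proof (induction n)
  case 0 then show ?case by simp
next
  case (Suc n)
  have "(x + y) ^ (CHAR('b) ^ Suc n) = ((x + y) ^ (CHAR('b) ^ n)) ^ CHAR('b)"
    by (simp add: power_mult[symmetric] mult.commute)
  also have "\<dots> = (x ^ (CHAR('b) ^ n)) ^ CHAR('b) + (y ^ (CHAR('b) ^ n)) ^ CHAR('b)"
    using Suc frob_prime[OF p] by simp
  also have "\<dots> = x ^ (CHAR('b) ^ Suc n) + y ^ (CHAR('b) ^ Suc n)"
    by (simp add: power_mult[symmetric] mult.commute)
  finally show ?case .
qed

lemma card_prime_power:
  "\<exists>k. CARD('a::{finite,field}) = CHAR('a) ^ k"
proof -
  let ?p = "CHAR('a)"
  define P where "P = range (of_nat :: nat \<Rightarrow> 'a)"
  have sf: "subfield_set P"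
  proof
    show "0 \<in> P" unfolding P_def by (rule range_eqI[of _ _ 0]) simp
    show "1 \<in> P" unfolding P_def by (rule range_eqI[of _ _ 1]) simp
    show "x + y \<in> P" if "x \<in> P" "y \<in> P" for x y
    proof -
      from that obtain a b where "x = of_nat a" "y = of_nat b" unfolding P_def by blast
      then have "x + y = of_nat (a + b)" by simp
      then show ?thesis unfolding P_def by blast
    qed
    show "x * y \<in> P" if "x \<in> P" "y \<in> P" for x y
    proof -
      from that obtain a b where "x = of_nat a" "y = of_nat b" unfolding P_def by blast
      then have "x * y = of_nat (a * b)" by simp
      then show ?thesis unfolding P_def by blast
    qed
    show "- x \<in> P" if "x \<in> P" for x
    proof -
      from that obtain a where a: "x = of_nat a" unfolding P_def by blast
      have "of_nat (?p * a - a) = (of_nat (?p * a) - of_nat a :: 'a)"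
        using CHAR_finite_field(1)[where 'a='a] by (intro of_nat_diff) simp
      also have "\<dots> = - x" by (simp add: a)
      finally have "- x = of_nat (?p * a - a)" by simp
      thus ?thesis unfolding P_def by (rule range_eqI)
    qed
    show "inverse x \<in> P" if "x \<in> P" for x
    proof (cases "x = 0")
      case True then show ?thesis using \<open>0 \<in> P\<close> by simp
    next
      case False
      from that obtain a where a: "x = of_nat a" unfolding P_def by blast
      have c2: "CARD('a) \<ge> 2"
      proof -
        have "card {0, 1::'a} \<le> CARD('a)" by (rule card_mono) auto
        thus ?thesis by simp
      qed
      obtain m where m: "CARD('a) = Suc (Suc m)" using c2 by (metis add_2_eq_Suc le_Suc_ex)
      have "x * x ^ Suc m = x * 1" using fermat_field[of x] unfolding m by simp
      hence e: "x * x ^ m = 1" using False by (simp add: mult_left_cancel)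
      have "inverse x = x ^ m" using e by (rule inverse_unique)
      also have "m = CARD('a) - 2" using m by simp
      finally have "inverse x = x ^ (CARD('a) - 2)" .
      also have "\<dots> = of_nat (a ^ (CARD('a) - 2))" by (simp add: a)
      finally show ?thesis unfolding P_def by (rule range_eqI)
    qed
  qed
  have fP: "finite P" by simp
  obtain k w where bij: "bij_betw (\<lambda>c. lc k c w) (cfs P k) (UNIV :: 'a set)"
    using subfield_set.span_bij[OF sf fP, of UNIV] by auto
  have "CARD('a) = card (cfs P k)" using bij_betw_same_card[OF bij] by simp
  also have "\<dots> = card P ^ k" by (rule card_cfs[OF fP])
  also have "card P = ?p"
  proof -
    have "P = of_nat ` {..<?p}"
    proof
      show "of_nat ` {..<?p} \<subseteq> P" unfolding P_def by auto
      show "P \<subseteq> of_nat ` {..<?p}"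
      proof
        fix x assume "x \<in> P"
        then obtain a where a: "x = of_nat a" unfolding P_def by blast
        have "of_nat a = (of_nat (a mod ?p) :: 'a)"
          by (simp add: of_nat_eq_iff_cong_CHAR cong_def)
        moreover have "a mod ?p < ?p" using CHAR_finite_field(1)[where 'a='a] by simp
        ultimately show "x \<in> of_nat ` {..<?p}" using a by blast
      qed
    qed
    moreover have "inj_on (of_nat :: nat \<Rightarrow> 'a) {..<?p}"
      by (auto simp: inj_on_def of_nat_eq_iff_cong_CHAR cong_def)
    ultimately show ?thesis by (simp add: card_image)
  qed
  finally show ?thesis by blast
qed


lemma CHAR_L: "CHAR('a::{finite,field} alg_closure) = CHAR('a)" by simp

lemma poly_sq_root_deriv:
  fixes x :: "'b::idom"
  shows "poly (pderiv ([:-x,1:] * ([:-x,1:] * h))) x = 0"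
  unfolding pderiv_mult poly_add poly_mult by simp

lemma card_K:
  assumes r: "r \<ge> 1"
  defines "Q \<equiv> CARD('a::{finite,field}) ^ r"
  shows "card {z :: 'a alg_closure. z ^ Q = z} = Q"
proof -
  have c2: "CARD('a) \<ge> 2"
  proof -
    have "card {0, 1::'a} \<le> CARD('a)" by (rule card_mono) auto
    thus ?thesis by simp
  qed
  have Q2: "Q \<ge> 2"
  proof -
    have "CARD('a) ^ 1 \<le> CARD('a) ^ r" using r c2 by (intro power_increasing) auto
    thus ?thesis using c2 unfolding Q_def by simp
  qed
  obtain k0 where k0: "CARD('a) = CHAR('a) ^ k0" using card_prime_power by blast
  have pQ: "CHAR('a) dvd Q"
  proof -
    have "k0 \<noteq> 0" using k0 c2 by (metis power_0 numeral_le_one_iff semiring_norm(69))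
    then have "CHAR('a) dvd CARD('a)" unfolding k0 by simp
    moreover have "CARD('a) dvd CARD('a) ^ r" using r by (intro dvd_power) auto
    ultimately show ?thesis unfolding Q_def by (rule dvd_trans)
  qed
  define P :: "'a alg_closure poly" where "P = monom 1 Q + [:0, -1:]"
  have degP: "degree P = Q"
  proof -
    have "degree [:0, -1::'a alg_closure:] = 1" by simp
    also have "\<dots> < degree (monom (1::'a alg_closure) Q)" using Q2 by (simp add: degree_monom_eq)
    finally show ?thesis unfolding P_def by (subst degree_add_eq_left) (simp_all add: degree_monom_eq)
  qed
  have P0: "P \<noteq> 0" using degP Q2 by auto
  have lcP: "lead_coeff P = 1"
  proof -
    obtain m where m: "Q = Suc (Suc m)" using Q2 by (metis add_2_eq_Suc le_Suc_ex)
    show ?thesis using degP unfolding P_def m by (simp add: coeff_monom)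
  qed
  have polyP: "poly P z = z ^ Q - z" for z by (simp add: P_def poly_monom)
  have ofQ: "(of_nat Q :: 'a alg_closure) = 0"
    using pQ by (simp add: of_nat_eq_0_iff_char_dvd)
  have dP: "poly (pderiv P) z = -1" for z
    by (simp add: P_def pderiv_add pderiv_monom pderiv_pCons ofQ)
  obtain A where A: "size A = degree P" "P = smult (lead_coeff P) (\<Prod>x\<in>#A. [:-x, 1:])"
    using alg_closed_imp_factorization[OF P0] by blast
  have PA: "P = (\<Prod>x\<in>#A. [:-x, 1:])" using A(2) lcP by simp
  have cnt: "count A x \<le> 1" for x
  proof (rule ccontr)
    assume "\<not> count A x \<le> 1"
    then have "count A x \<ge> 2" by simp
    define A1 where "A1 = A - {#x#}"
    have xA: "x \<in># A" using \<open>count A x \<ge> 2\<close> by (simp add: count_inI)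
    have A1: "A = add_mset x A1" unfolding A1_def using xA by (simp add: insert_DiffM)
    have "count A1 x \<ge> 1" using \<open>count A x \<ge> 2\<close> unfolding A1_def by simp
    hence xA1: "x \<in># A1" by (simp add: count_inI)
    define B where "B = A1 - {#x#}"
    have B: "A = add_mset x (add_mset x B)" unfolding B_def using A1 xA1 by (simp add: insert_DiffM)
    have "P = [:-x,1:] * ([:-x,1:] * (\<Prod>y\<in>#B. [:-y, 1:]))" using PA B by simp
    hence "poly (pderiv P) x = 0" using poly_sq_root_deriv[of x] by simp
    thus False using dP by simp
  qed
  have setA: "set_mset A = {z. z ^ Q = z}"
  proof -
    have "poly P z = (\<Prod>y\<in>#A. z - y)" for z
      unfolding PA by (simp add: poly_prod_mset)
    moreover have "(\<Prod>y\<in>#A. z - y) = 0 \<longleftrightarrow> z \<in># A" for z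
    proof -
      have "(\<Prod>y\<in>#A. z - y) = 0 \<longleftrightarrow> 0 \<in># image_mset (\<lambda>y. z - y) A"
        by (rule prod_mset_zero_iff)
      also have "\<dots> \<longleftrightarrow> z \<in># A" by auto
      finally show ?thesis .
    qed
    ultimately have "z ^ Q = z \<longleftrightarrow> z \<in># A" for z
      using polyP[of z] by (metis eq_iff_diff_eq_0)
    thus ?thesis by auto
  qed
  have "size A = (\<Sum>x\<in>set_mset A. count A x)" by (rule size_multiset_overloaded_eq)
  also have "\<dots> = (\<Sum>x\<in>set_mset A. 1)"
    using cnt by (intro sum.cong) (auto intro: antisym simp: Suc_le_eq)
  also have "\<dots> = card (set_mset A)" by simp
  finally show ?thesis using setA A(1) degP by simp
qed


lemma field_ext:
  assumes r: "r \<ge> 1"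
  shows "\<exists>(K :: 'a::{finite,field} alg_closure set) \<beta>. (\<forall>x\<in>K. \<forall>y\<in>K. x * y \<in> K) \<and>
     bij_betw (\<lambda>c. \<Sum>i<r. to_ac (c i) * \<beta> i) {c :: nat \<Rightarrow> 'a. \<forall>i\<ge>r. c i = 0} K"
proof -
  define Q where "Q = CARD('a) ^ r"
  define K where "K = {z :: 'a alg_closure. z ^ Q = z}"
  have cK: "card K = Q" unfolding K_def Q_def using card_K[OF r] by simp
  have c2: "CARD('a) \<ge> 2"
  proof -
    have "card {0, 1::'a} \<le> CARD('a)" by (rule card_mono) auto
    thus ?thesis by simp
  qed
  have Q0: "Q > 0" unfolding Q_def using c2 by simp
  have fK: "finite K" using cK Q0 by (simp add: card_ge_0_finite)
  obtain k0 where k0: "CARD('a) = CHAR('a) ^ k0" using card_prime_power by blast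
  have QL: "Q = CHAR('a alg_closure) ^ (k0 * r)" unfolding Q_def k0 by (simp add: power_mult)
  have pL: "Factorial_Ring.prime CHAR('a alg_closure)" using CHAR_finite_field(2)[where 'a='a] by simp
  have Kadd: "x + y \<in> K" if "x \<in> K" "y \<in> K" for x y
    using that frob_prime_pow[OF pL, of x y "k0 * r"] unfolding K_def QL by simp
  have Kmul: "x * y \<in> K" if "x \<in> K" "y \<in> K" for x y
    using that unfolding K_def by (simp add: power_mult_distrib)
  have K0: "0 \<in> K" using Q0 unfolding K_def by simp
  have Kc: "to_ac a \<in> K" for a :: 'a
  proof -
    have "to_ac a ^ Q = to_ac (a ^ Q)" by simp
    also have "a ^ Q = a" unfolding Q_def by (rule fermat_field_pow)
    finally show ?thesis unfolding K_def by simp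
  qed
  have sf: "subfield_set (range (to_ac :: 'a \<Rightarrow> 'a alg_closure))"
  proof
    show "0 \<in> range (to_ac :: 'a \<Rightarrow> 'a alg_closure)" by (rule range_eqI[of _ _ 0]) simp
    show "1 \<in> range (to_ac :: 'a \<Rightarrow> 'a alg_closure)" by (rule range_eqI[of _ _ 1]) simp
    show "x + y \<in> range (to_ac :: 'a \<Rightarrow> 'a alg_closure)" if "x \<in> range to_ac" "y \<in> range to_ac" for x y
      proof -
      from that obtain a b where "x = to_ac a" "y = to_ac b" by blast
      then have "x + y = to_ac (a + b)" by simp
      thus ?thesis by (rule range_eqI)
    qed
    show "x * y \<in> range (to_ac :: 'a \<Rightarrow> 'a alg_closure)" if "x \<in> range to_ac" "y \<in> range to_ac" for x y
      proof -
      from that obtain a b where "x = to_ac a" "y = to_ac b" by blast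
      then have "x * y = to_ac (a * b)" by simp
      thus ?thesis by (rule range_eqI)
    qed
    show "- x \<in> range (to_ac :: 'a \<Rightarrow> 'a alg_closure)" if "x \<in> range to_ac" for x
      proof -
      from that obtain a where "x = to_ac a" by blast
      then have "- x = to_ac (- a)" by simp
      thus ?thesis by (rule range_eqI)
    qed
    show "inverse x \<in> range (to_ac :: 'a \<Rightarrow> 'a alg_closure)" if "x \<in> range to_ac" for x
      proof -
      from that obtain a where "x = to_ac a" by blast
      then have "inverse x = to_ac (inverse a)" by simp
      thus ?thesis by (rule range_eqI)
    qed
  qed
  have fS: "finite (range (to_ac :: 'a \<Rightarrow> 'a alg_closure))" by simp
  have cS: "card (range (to_ac :: 'a \<Rightarrow> 'a alg_closure)) = CARD('a)"
    by (simp add: card_image inj_to_ac)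
  obtain k w where bij: "bij_betw (\<lambda>c. lc k c w) (cfs (range to_ac) k) K"
    using subfield_set.span_bij[OF sf fS fK K0 Kadd] Kc Kmul by blast
  have "CARD('a) ^ k = card K"
    using bij_betw_same_card[OF bij] card_cfs[OF fS, of k] cS by simp
  also have "\<dots> = CARD('a) ^ r" using cK Q_def by simp
  finally have kr: "k = r" using c2 by (simp add: power_inject_exp)
  have bij2: "bij_betw (\<lambda>c. to_ac \<circ> c) {c :: nat \<Rightarrow> 'a. \<forall>i\<ge>r. c i = 0} (cfs (range to_ac) r)"
  proof (rule bij_betw_imageI)
    show "inj_on (\<lambda>c. to_ac \<circ> c) {c :: nat \<Rightarrow> 'a. \<forall>i\<ge>r. c i = 0}"
      by (auto simp: inj_on_def fun_eq_iff)
    show "(\<lambda>c. to_ac \<circ> c) ` {c :: nat \<Rightarrow> 'a. \<forall>i\<ge>r. c i = 0} = cfs (range to_ac) r"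
    proof
      show "(\<lambda>c. to_ac \<circ> c) ` {c :: nat \<Rightarrow> 'a. \<forall>i\<ge>r. c i = 0} \<subseteq> cfs (range to_ac) r"
        by (auto simp: cfs_def)
      show "cfs (range to_ac) r \<subseteq> (\<lambda>c. to_ac \<circ> c) ` {c :: nat \<Rightarrow> 'a. \<forall>i\<ge>r. c i = 0}"
      proof
        fix c' :: "nat \<Rightarrow> 'a alg_closure" assume c': "c' \<in> cfs (range to_ac) r"
        have "c' = to_ac \<circ> (of_ac \<circ> c')"
        proof
          fix i show "c' i = (to_ac \<circ> (of_ac \<circ> c')) i"
          proof (cases "i < r")
            case True then have "c' i \<in> range to_ac" using c' by (auto simp: cfs_def)
            then show ?thesis by (simp add: to_ac_of_ac)
          next
            case False then show ?thesis using c' by (auto simp: cfs_def)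
          qed
        qed
        moreover have "of_ac \<circ> c' \<in> {c :: nat \<Rightarrow> 'a. \<forall>i\<ge>r. c i = 0}" using c' by (auto simp: cfs_def)
        ultimately show "c' \<in> (\<lambda>c. to_ac \<circ> c) ` {c :: nat \<Rightarrow> 'a. \<forall>i\<ge>r. c i = 0}" by blast
      qed
    qed
  qed
  have "bij_betw ((\<lambda>c. lc r c w) \<circ> (\<lambda>c. to_ac \<circ> c)) {c :: nat \<Rightarrow> 'a. \<forall>i\<ge>r. c i = 0} K"
    using bij_betw_trans[OF bij2] bij kr by simp
  moreover have "((\<lambda>c. lc r c w) \<circ> (\<lambda>c. to_ac \<circ> c)) = (\<lambda>c. \<Sum>i<r. to_ac (c i) * w i)"
    by (simp add: lc_def fun_eq_iff)
  ultimately show ?thesis using Kmul by auto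
qed


definition subsp :: "(nat \<Rightarrow> 'a::field) set \<Rightarrow> bool" where
  "subsp U \<longleftrightarrow> (\<lambda>i. 0) \<in> U \<and> (\<forall>x\<in>U. \<forall>y\<in>U. (\<lambda>i. x i + y i) \<in> U) \<and> (\<forall>c. \<forall>x\<in>U. (\<lambda>i. c * x i) \<in> U)"

definition lf :: "(nat \<Rightarrow> 'a::field) \<Rightarrow> nat \<Rightarrow> (nat \<Rightarrow> 'a) \<Rightarrow> 'a" where
  "lf a n x = (\<Sum>i<n. a i * x i)"

lemma lf_add: "lf a n (\<lambda>i. x i + y i) = lf a n x + lf a n y"
  by (simp add: lf_def distrib_left sum.distrib)

lemma lf_smult: "lf a n (\<lambda>i. c * x i) = c * lf a n x"
  by (simp add: lf_def sum_distrib_left mult_ac)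

lemma subsp_vecs: "subsp (vecs n)"
  by (simp add: subsp_def vecs_def)

lemma card_vecs: "card (vecs n :: (nat \<Rightarrow> 'a::{finite,field}) set) = CARD('a) ^ n"
proof -
  have "vecs n = cfs (UNIV :: 'a set) n" by (simp add: vecs_def cfs_def)
  thus ?thesis by (simp add: card_cfs)
qed

lemma finite_vecs: "finite (vecs n :: (nat \<Rightarrow> 'a::{finite,field}) set)"
proof -
  have "CARD('a) ^ n > 0" by (simp add: finite_UNIV_card_ge_0)
  thus ?thesis using card_vecs[of n, where 'a='a] by (metis card_ge_0_finite)
qed

lemma fiber_card:
  fixes U :: "(nat \<Rightarrow> 'a::{finite,field}) set"
  assumes fU: "finite U" and sU: "subsp U" and u0: "u0 \<in> U" and nz: "lf a n u0 \<noteq> 0"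
  shows "CARD('a) * card {x\<in>U. lf a n x = \<gamma>} = card U"
proof -
  define u1 where "u1 = (\<lambda>i. inverse (lf a n u0) * u0 i)"
  have u1U: "u1 \<in> U" using sU u0 by (simp add: subsp_def u1_def)
  have lu1: "lf a n u1 = 1" using nz by (simp add: u1_def lf_smult)
  have addU: "(\<lambda>i. x i + y i) \<in> U" if "x \<in> U" "y \<in> U" for x y using sU that by (simp add: subsp_def)
  have smU: "(\<lambda>i. c * x i) \<in> U" if "x \<in> U" for x c using sU that by (simp add: subsp_def)
  have combU: "(\<lambda>i. x i + c * y i) \<in> U" if "x \<in> U" "y \<in> U" for x y c
    using addU[OF that(1) smU[OF that(2)]] .
  have lcomb: "lf a n (\<lambda>i. x i + c * y i) = lf a n x + c * lf a n y" for x y c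
    by (simp add: lf_add lf_smult)
  define Ker where "Ker = {x\<in>U. lf a n x = 0}"
  have b1: "bij_betw (\<lambda>x. ((\<lambda>i. x i + (- lf a n x) * u1 i), lf a n x)) U (Ker \<times> UNIV)"
  proof (rule bij_betw_byWitness[where f'="\<lambda>(k, c). (\<lambda>i. k i + c * u1 i)"])
    show "\<forall>x\<in>U. (\<lambda>(k, c). (\<lambda>i. k i + c * u1 i)) ((\<lambda>i. x i + (- lf a n x) * u1 i), lf a n x) = x"
      by (auto simp: fun_eq_iff algebra_simps)
    show "\<forall>y\<in>Ker \<times> UNIV. (\<lambda>x. ((\<lambda>i. x i + (- lf a n x) * u1 i), lf a n x))
            ((\<lambda>(k, c). (\<lambda>i. k i + c * u1 i)) y) = y"
      by (auto simp: Ker_def lcomb lu1 fun_eq_iff algebra_simps)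
    show "(\<lambda>x. ((\<lambda>i. x i + (- lf a n x) * u1 i), lf a n x)) ` U \<subseteq> Ker \<times> UNIV"
    proof (rule image_subsetI)
      fix x assume x: "x \<in> U"
      have "(\<lambda>i. x i + (- lf a n x) * u1 i) \<in> U" by (rule combU[OF x u1U])
      moreover have "lf a n (\<lambda>i. x i + (- lf a n x) * u1 i) = 0"
        unfolding lcomb lu1 by simp
      ultimately show "((\<lambda>i. x i + (- lf a n x) * u1 i), lf a n x) \<in> Ker \<times> UNIV"
        by (simp add: Ker_def)
    qed
    show "(\<lambda>(k, c). (\<lambda>i. k i + c * u1 i)) ` (Ker \<times> UNIV) \<subseteq> U"
      using combU[OF _ u1U] by (auto simp: Ker_def)
  qed
  have c1: "card U = card Ker * CARD('a)"
    using bij_betw_same_card[OF b1] by (simp add: card_cartesian_product)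
  have b2: "bij_betw (\<lambda>x. (\<lambda>i. x i + (- \<gamma>) * u1 i)) {x\<in>U. lf a n x = \<gamma>} Ker"
  proof (rule bij_betw_byWitness[where f'="\<lambda>k. (\<lambda>i. k i + \<gamma> * u1 i)"])
    show "\<forall>x\<in>{x\<in>U. lf a n x = \<gamma>}. (\<lambda>i. (x i + (- \<gamma>) * u1 i) + \<gamma> * u1 i) = x"
      by auto
    show "\<forall>k\<in>Ker. (\<lambda>i. (k i + \<gamma> * u1 i) + (- \<gamma>) * u1 i) = k"
      by auto
    show "(\<lambda>x. (\<lambda>i. x i + (- \<gamma>) * u1 i)) ` {x\<in>U. lf a n x = \<gamma>} \<subseteq> Ker"
    proof (rule image_subsetI)
      fix x assume x: "x \<in> {x\<in>U. lf a n x = \<gamma>}"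
      have "(\<lambda>i. x i + (- \<gamma>) * u1 i) \<in> U" using x by (intro combU u1U) simp
      moreover have "lf a n (\<lambda>i. x i + (- \<gamma>) * u1 i) = 0"
        unfolding lcomb lu1 using x by simp
      ultimately show "(\<lambda>i. x i + (- \<gamma>) * u1 i) \<in> Ker" by (simp add: Ker_def)
    qed
    show "(\<lambda>k. (\<lambda>i. k i + \<gamma> * u1 i)) ` Ker \<subseteq> {x\<in>U. lf a n x = \<gamma>}"
      using combU[OF _ u1U] by (auto simp: Ker_def lcomb lu1)
  qed
  have "card {x\<in>U. lf a n x = \<gamma>} = card Ker" by (rule bij_betw_same_card[OF b2])
  with c1 show ?thesis by simp
qed

lemma nonzero_count:
  fixes U :: "(nat \<Rightarrow> 'a::{finite,field}) set"
  assumes fU: "finite U" and sU: "subsp U"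
  shows "card {x\<in>U. lf a n x \<noteq> \<gamma>} = card {x\<in>U. lf a n x \<noteq> 0} \<or>
         (\<forall>x\<in>U. lf a n x = 0)"
proof (cases "\<forall>x\<in>U. lf a n x = 0")
  case False
  then obtain u0 where u0: "u0 \<in> U" "lf a n u0 \<noteq> 0" by blast
  have e: "card {x\<in>U. lf a n x \<noteq> g} = card U - card {x\<in>U. lf a n x = g}" for g
  proof -
    have "{x\<in>U. lf a n x \<noteq> g} = U - {x\<in>U. lf a n x = g}" by auto
    thus ?thesis using fU by (simp add: card_Diff_subset)
  qed
  have "CARD('a) * card {x\<in>U. lf a n x = \<gamma>} = CARD('a) * card {x\<in>U. lf a n x = 0}"
    using fiber_card[OF fU sU u0] by simp
  moreover have "CARD('a) \<noteq> 0" by (simp add: finite_UNIV_card_ge_0)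
  ultimately have "card {x\<in>U. lf a n x = \<gamma>} = card {x\<in>U. lf a n x = 0}" by (rule mult_left_cancel[THEN iffD1, rotated])
  then have "card {x\<in>U. lf a n x \<noteq> \<gamma>} = card {x\<in>U. lf a n x \<noteq> 0}"
    unfolding e by (rule arg_cong)
  then show ?thesis by (rule disjI1)
qed simp

lemma nonzero_count_mult:
  fixes U :: "(nat \<Rightarrow> 'a::{finite,field}) set"
  assumes fU: "finite U" and sU: "subsp U"
  shows "CARD('a) * card {x\<in>U. lf a n x \<noteq> 0} = (CARD('a) - 1) * card U \<or>
         card {x\<in>U. lf a n x \<noteq> 0} = 0"
proof (cases "\<forall>x\<in>U. lf a n x = 0")
  case True
  then have "{x\<in>U. lf a n x \<noteq> 0} = {}" by auto
  then have "card {x\<in>U. lf a n x \<noteq> 0} = 0" by (metis card.empty)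
  then show ?thesis by (rule disjI2)
next
  case False
  then obtain u0 where u0: "u0 \<in> U" "lf a n u0 \<noteq> 0" by blast
  have "{x\<in>U. lf a n x \<noteq> 0} = U - {x\<in>U. lf a n x = 0}" by auto
  hence "card {x\<in>U. lf a n x \<noteq> 0} = card U - card {x\<in>U. lf a n x = 0}"
    using fU by (simp add: card_Diff_subset)
  hence "CARD('a) * card {x\<in>U. lf a n x \<noteq> 0} = CARD('a) * card U - CARD('a) * card {x\<in>U. lf a n x = 0}"
    by (simp only: diff_mult_distrib2)
  also have "CARD('a) * card {x\<in>U. lf a n x = 0} = card U" by (rule fiber_card[OF fU sU u0])
  also have "CARD('a) * card U - card U = (CARD('a) - 1) * card U" by (simp only: diff_mult_distrib mult_1)
  finally show ?thesis by (rule disjI1)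
qed


definition line :: "(nat \<Rightarrow> 'a::field) \<Rightarrow> (nat \<Rightarrow> 'a) set" where
  "line x = {(\<lambda>i. c * x i) | c. True}"

definition cone :: "nat \<Rightarrow> (nat \<Rightarrow> 'a::field) set \<Rightarrow> bool" where
  "cone v K \<longleftrightarrow> K \<subseteq> vecs v \<and> (\<lambda>i. 0) \<notin> K \<and> (\<forall>x\<in>K. \<forall>c. c \<noteq> 0 \<longrightarrow> (\<lambda>i. c * x i) \<in> K)"

lemma zero_in_line: "(\<lambda>i. 0) \<in> line x"
  unfolding line_def by (rule CollectI, rule exI[of _ 0]) simp

lemma self_in_line: "x \<in> line x"
  unfolding line_def by (rule CollectI, rule exI[of _ 1]) simp

lemma nz_vec: "x \<noteq> (\<lambda>i. 0) \<Longrightarrow> \<exists>i. x i \<noteq> 0" by auto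

lemma line_minus0:
  assumes x: "x \<noteq> (\<lambda>i. 0)"
  shows "line x - {\<lambda>i. 0} = (\<lambda>c. (\<lambda>i. c * x i)) ` (UNIV - {0})"
proof -
  obtain i0 where i0: "x i0 \<noteq> 0" using x by auto
  have "(\<lambda>i. c * x i) \<noteq> (\<lambda>i. 0)" if "c \<noteq> 0" for c
  proof
    assume "(\<lambda>i. c * x i) = (\<lambda>i. 0)"
    hence "c * x i0 = 0" by (metis (mono_tags))
    thus False using that i0 by simp
  qed
  moreover have "(\<lambda>i. 0 * x i) = (\<lambda>i. 0)" by simp
  ultimately show ?thesis unfolding line_def by auto
qed

lemma card_line_minus0:
  assumes x: "x \<noteq> (\<lambda>i. 0)"
  shows "card (line x - {\<lambda>i. 0 :: 'a::{finite,field}}) = CARD('a) - 1"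
proof -
  obtain i0 where i0: "x i0 \<noteq> 0" using x by auto
  have "inj_on (\<lambda>c. (\<lambda>i. c * x i)) (UNIV - {0::'a})"
  proof (rule inj_onI)
    fix c d :: 'a assume "(\<lambda>i. c * x i) = (\<lambda>i. d * x i)"
    hence "c * x i0 = d * x i0" by (metis (mono_tags))
    thus "c = d" using i0 by simp
  qed
  hence "card ((\<lambda>c. (\<lambda>i. c * x i)) ` (UNIV - {0::'a})) = card (UNIV - {0::'a})"
    by (rule card_image)
  thus ?thesis using line_minus0[OF x] by (simp add: card_Diff_singleton)
qed

lemma line_eq:
  assumes y: "y \<in> line x" "y \<noteq> (\<lambda>i. 0)"
  shows "line y = line x"
proof -
  from y obtain c where c: "y = (\<lambda>i. c * x i)" unfolding line_def by blast
  have c0: "c \<noteq> 0" using y c by auto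
  show ?thesis
  proof
    show "line y \<subseteq> line x"
    proof
      fix z assume "z \<in> line y"
      then obtain d where "z = (\<lambda>i. d * y i)" unfolding line_def by blast
      hence "z = (\<lambda>i. (d * c) * x i)" using c by (simp add: mult.assoc)
      thus "z \<in> line x" unfolding line_def by blast
    qed
    show "line x \<subseteq> line y"
    proof
      fix z assume "z \<in> line x"
      then obtain d where "z = (\<lambda>i. d * x i)" unfolding line_def by blast
      hence "z = (\<lambda>i. (d / c) * y i)" using c c0 by (simp add: fun_eq_iff)
      thus "z \<in> line y" unfolding line_def by blast
    qed
  qed
qed

lemma cone_card:
  fixes K :: "(nat \<Rightarrow> 'a::{finite,field}) set"
  assumes K: "cone v K"
  shows "(CARD('a) - 1) * card (line ` K) = card K"
proof -
  have fK: "finite K" using K finite_vecs[of v, where 'a='a] unfolding cone_def by (meson finite_subset)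
  have nz: "x \<noteq> (\<lambda>i. 0)" if "x \<in> K" for x using K that unfolding cone_def by auto
  define C' where "C' = (\<lambda>P. P - {\<lambda>i. 0}) ` (line ` K)"
  have UC: "\<Union>C' = K"
  proof
    show "\<Union>C' \<subseteq> K"
    proof
      fix y assume "y \<in> \<Union>C'"
      then obtain x where x: "x \<in> K" and y: "y \<in> line x" "y \<noteq> (\<lambda>i. 0)" unfolding C'_def by auto
      from y obtain c where c: "y = (\<lambda>i. c * x i)" unfolding line_def by blast
      have "c \<noteq> 0" using y c by auto
      thus "y \<in> K" using K x c unfolding cone_def by blast
    qed
    show "K \<subseteq> \<Union>C'"
    proof
      fix x assume x: "x \<in> K"
      have "x \<in> line x - {\<lambda>i. 0}" using self_in_line nz[OF x] by auto
      thus "x \<in> \<Union>C'" using x unfolding C'_def by blast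
    qed
  qed
  have inj: "inj_on (\<lambda>P. P - {\<lambda>i. 0}) (line ` K)"
  proof (rule inj_onI)
    fix P1 P2 assume "P1 \<in> line ` K" "P2 \<in> line ` K" and e: "P1 - {\<lambda>i. 0} = P2 - {\<lambda>i. 0}"
    then have "(\<lambda>i. 0) \<in> P1" "(\<lambda>i. 0) \<in> P2" using zero_in_line by auto
    with e show "P1 = P2" by blast
  qed
  have "(CARD('a) - 1) * card C' = card (\<Union>C')"
  proof (rule card_partition)
    show "finite C'" unfolding C'_def using fK by simp
    show "finite (\<Union>C')" using UC fK by simp
    show "card c = CARD('a) - 1" if "c \<in> C'" for c
      using that card_line_minus0 nz unfolding C'_def by auto
    show "c1 \<inter> c2 = {}" if "c1 \<in> C'" "c2 \<in> C'" "c1 \<noteq> c2" for c1 c2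
    proof (rule ccontr)
      assume "c1 \<inter> c2 \<noteq> {}"
      then obtain y where y1: "y \<in> c1" and y2: "y \<in> c2" by blast
      from that(1) obtain x1 where x1: "x1 \<in> K" "c1 = line x1 - {\<lambda>i. 0}" unfolding C'_def by blast
      from that(2) obtain x2 where x2: "x2 \<in> K" "c2 = line x2 - {\<lambda>i. 0}" unfolding C'_def by blast
      have "line y = line x1" using y1 x1 by (intro line_eq) auto
      moreover have "line y = line x2" using y2 x2 by (intro line_eq) auto
      ultimately have "c1 = c2" using x1 x2 by simp
      thus False using that(3) by simp
    qed
  qed
  moreover have "card C' = card (line ` K)" unfolding C'_def using inj by (rule card_image)
  ultimately show ?thesis using UC by simp
qed

lemma cone_points:
  assumes K: "cone v K"
  shows "line ` K \<subseteq> points v"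
proof
  fix P assume "P \<in> line ` K"
  then obtain x where x: "x \<in> K" "P = line x" by blast
  have "x \<in> vecs v" "x \<noteq> (\<lambda>i. 0)" using K x unfolding cone_def by auto
  thus "P \<in> points v" unfolding points_def
    by (intro CollectI exI[of _ x]) (simp add: x(2) line_def)
qed

lemma cone_hyp:
  assumes K: "cone v K"
  shows "{P \<in> line ` K. P \<subseteq> {x \<in> vecs v. lf a v x = 0}} = line ` {x\<in>K. lf a v x = 0}"
proof
  show "{P \<in> line ` K. P \<subseteq> {x \<in> vecs v. lf a v x = 0}} \<subseteq> line ` {x\<in>K. lf a v x = 0}"
  proof
    fix P assume P: "P \<in> {P \<in> line ` K. P \<subseteq> {x \<in> vecs v. lf a v x = 0}}"
    then obtain x where x: "x \<in> K" "P = line x" by blast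
    have "lf a v x = 0" using P x self_in_line[of x] by blast
    thus "P \<in> line ` {x\<in>K. lf a v x = 0}" using x by blast
  qed
  show "line ` {x\<in>K. lf a v x = 0} \<subseteq> {P \<in> line ` K. P \<subseteq> {x \<in> vecs v. lf a v x = 0}}"
  proof
    fix P assume "P \<in> line ` {x\<in>K. lf a v x = 0}"
    then obtain x where x: "x \<in> K" "lf a v x = 0" "P = line x" by blast
    have xv: "x \<in> vecs v" using K x unfolding cone_def by auto
    have "line x \<subseteq> {x \<in> vecs v. lf a v x = 0}"
    proof
      fix y assume "y \<in> line x"
      then obtain c where "y = (\<lambda>i. c * x i)" unfolding line_def by blast
      thus "y \<in> {x \<in> vecs v. lf a v x = 0}" using xv x(2) by (simp add: lf_smult vecs_def)
    qed
    thus "P \<in> {P \<in> line ` K. P \<subseteq> {x \<in> vecs v. lf a v x = 0}}" using x by blast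
  qed
qed

lemma cone_filter: "cone v K \<Longrightarrow> cone v {x\<in>K. lf a v x = 0}"
  unfolding cone_def by (auto simp: lf_smult)

theorem cone_divisible:
  fixes K :: "(nat \<Rightarrow> 'a::{finite,field}) set"
  assumes K: "cone v K"
    and dv: "\<And>a. CARD('a) ^ r dvd card {x\<in>K. lf a v x \<noteq> 0}"
  shows "divisible_pts v (CARD('a) ^ r) (line ` K)"
proof -
  have fK: "finite K" using K finite_vecs[of v, where 'a='a] unfolding cone_def by (meson finite_subset)
  have cop: "coprime (CARD('a) ^ r) (CARD('a) - 1)"
  proof -
    have "CARD('a) > 0" by (simp add: finite_UNIV_card_ge_0)
    then have "CARD('a) = Suc (CARD('a) - 1)" by simp
    then have "coprime (CARD('a)) (CARD('a) - 1)" using coprime_Suc_left_nat by metis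
    thus ?thesis by (simp add: coprime_power_left_iff)
  qed
  have main: "[card {P \<in> line ` K. P \<subseteq> H} = card (line ` K)] (mod CARD('a) ^ r)"
    if HH: "H \<in> (hyperplanes v :: (nat \<Rightarrow> 'a) set set)" for H
  proof -
    from HH obtain a where "H = {x \<in> vecs v. (\<Sum>i<v. a i * x i) = 0}"
      unfolding hyperplanes_def by blast
    hence H: "H = {x \<in> vecs v. lf a v x = 0}" by (simp add: lf_def)
    let ?Z = "{x\<in>K. lf a v x = 0}" and ?N = "{x\<in>K. lf a v x \<noteq> 0}"
    have e1: "{P \<in> line ` K. P \<subseteq> H} = line ` ?Z" unfolding H by (rule cone_hyp[OF K])
    have e2: "(CARD('a) - 1) * card (line ` ?Z) = card ?Z" by (rule cone_card[OF cone_filter[OF K]])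
    have e3: "(CARD('a) - 1) * card (line ` K) = card K" by (rule cone_card[OF K])
    have e4: "card K = card ?Z + card ?N"
    proof -
      have "card (?Z \<union> ?N) = card ?Z + card ?N"
        by (rule card_Un_disjoint) (use fK in auto)
      moreover have "?Z \<union> ?N = K" by auto
      ultimately show ?thesis by simp
    qed
    have le: "card (line ` ?Z) \<le> card (line ` K)"
      using fK by (intro card_mono) auto
    have "(CARD('a) - 1) * (card (line ` K) - card (line ` ?Z)) =
          (CARD('a) - 1) * card (line ` K) - (CARD('a) - 1) * card (line ` ?Z)"
      by (rule diff_mult_distrib2)
    also have "\<dots> = card ?N" unfolding e2 e3 e4 by simp
    finally have "CARD('a) ^ r dvd (CARD('a) - 1) * (card (line ` K) - card (line ` ?Z))"
      using dv[of a] by simp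
    hence "CARD('a) ^ r dvd card (line ` K) - card (line ` ?Z)"
      using coprime_dvd_mult_right_iff[OF cop] by blast
    hence "[card (line ` K) = card (line ` ?Z)] (mod CARD('a) ^ r)"
      using cong_altdef_nat[OF le] by blast
    hence "[card (line ` ?Z) = card (line ` K)] (mod CARD('a) ^ r)" by (rule cong_sym)
    thus ?thesis using e1 by simp
  qed
  show ?thesis unfolding divisible_pts_def
    using cone_points[OF K] main by blast
qed


locale geo =
  fixes r j :: nat and S :: "nat \<Rightarrow> (nat \<Rightarrow> 'a::{finite,field}) set"
  assumes r1: "r \<ge> 1"
    and S_vecs: "\<And>t. t < j \<Longrightarrow> S t \<subseteq> vecs (2*r)"
    and S_subsp: "\<And>t. t < j \<Longrightarrow> subsp (S t)"
    and S_card: "\<And>t. t < j \<Longrightarrow> card (S t) = CARD('a) ^ r"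
    and S_disj: "\<And>t t' x. t < j \<Longrightarrow> t' < j \<Longrightarrow> t \<noteq> t' \<Longrightarrow> x \<in> S t \<Longrightarrow> x \<in> S t' \<Longrightarrow> x = (\<lambda>i. 0)"
begin

definition "vv = 2*r + 2*j"
definition "ee t = 2*r + 2*t"
definition "ff t = 2*r + 2*t + 1"
definition "resV x = (\<lambda>i. if i < 2*r then x i else (0::'a))"
definition "Tc t = {x. resV x \<in> S t \<and> x (ee t) \<noteq> 0 \<and> x (ff t) \<noteq> 0 \<and>
                    (\<forall>i. 2*r \<le> i \<longrightarrow> i \<noteq> ee t \<longrightarrow> i \<noteq> ff t \<longrightarrow> x i = 0)}"
definition "A0 = {x \<in> vecs (2*r). x \<noteq> (\<lambda>i. 0) \<and> (\<forall>t<j. x \<notin> S t)}"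
definition "KX = A0 \<union> (\<Union>t<j. Tc t)"

lemma S0: "t < j \<Longrightarrow> (\<lambda>i. 0) \<in> S t" using S_subsp by (simp add: subsp_def)

lemma S_sm: "t < j \<Longrightarrow> x \<in> S t \<Longrightarrow> (\<lambda>i. c * x i) \<in> S t" using S_subsp by (simp add: subsp_def)

lemma finite_S: "t < j \<Longrightarrow> finite (S t)"
  using S_vecs finite_vecs by (metis finite_subset)

lemma ee_ff: "ee t \<noteq> ff t'" "t \<noteq> t' \<Longrightarrow> ee t \<noteq> ee t'" "t \<noteq> t' \<Longrightarrow> ff t \<noteq> ff t'"
  "2*r \<le> ee t" "2*r \<le> ff t" "t < j \<Longrightarrow> ee t < vv" "t < j \<Longrightarrow> ff t < vv"
  unfolding ee_def ff_def vv_def by presburger+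

lemma resV_vecs: "x \<in> vecs (2*r) \<Longrightarrow> resV x = x"
  by (auto simp: resV_def vecs_def fun_eq_iff)

lemma Tc_vecs: "t < j \<Longrightarrow> Tc t \<subseteq> vecs vv"
proof
  fix x assume t: "t < j" and x: "x \<in> Tc t"
  show "x \<in> vecs vv" unfolding vecs_def
  proof (intro CollectI allI impI)
    fix i assume i: "vv \<le> i"
    have "2*r \<le> i" "i \<noteq> ee t" "i \<noteq> ff t" using i ee_ff(6,7)[OF t] unfolding vv_def by auto
    thus "x i = 0" using x unfolding Tc_def by blast
  qed
qed

lemma vecs_mono: "m \<le> n \<Longrightarrow> vecs m \<subseteq> vecs n"
  by (auto simp: vecs_def)

lemma cone_KX: "cone vv KX"
  unfolding cone_def
proof (intro conjI ballI allI impI)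
  show "KX \<subseteq> vecs vv"
    unfolding KX_def A0_def using Tc_vecs vecs_mono[of "2*r" vv] by (auto simp: vv_def)
  show "(\<lambda>i. 0) \<notin> KX" unfolding KX_def A0_def Tc_def by auto
  fix x and c :: 'a assume x: "x \<in> KX" and c: "c \<noteq> 0"
  show "(\<lambda>i. c * x i) \<in> KX"
  proof (cases "x \<in> A0")
    case True
    have "(\<lambda>i. c * x i) \<in> vecs (2*r)" using True by (auto simp: A0_def vecs_def)
    moreover have "(\<lambda>i. c * x i) \<noteq> (\<lambda>i. 0)"
    proof
      assume "(\<lambda>i. c * x i) = (\<lambda>i. 0)"
      hence "x = (\<lambda>i. 0)" using c by (simp add: fun_eq_iff)
      thus False using True by (simp add: A0_def)
    qed
    moreover have "(\<lambda>i. c * x i) \<notin> S t" if t: "t < j" for t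
    proof
      assume "(\<lambda>i. c * x i) \<in> S t"
      hence "(\<lambda>i. inverse c * (c * x i)) \<in> S t" using S_sm[OF t] by blast
      moreover have "(\<lambda>i. inverse c * (c * x i)) = x" using c by (simp add: mult.assoc[symmetric] fun_eq_iff)
      ultimately have "x \<in> S t" by simp
      thus False using True t by (simp add: A0_def)
    qed
    ultimately show ?thesis unfolding KX_def A0_def by blast
  next
    case False
    then obtain t where t: "t < j" and xt: "x \<in> Tc t" using x unfolding KX_def by blast
    have "resV (\<lambda>i. c * x i) = (\<lambda>i. c * resV x i)" by (simp add: resV_def fun_eq_iff)
    hence "resV (\<lambda>i. c * x i) \<in> S t" using xt S_sm[OF t] by (simp add: Tc_def)
    hence "(\<lambda>i. c * x i) \<in> Tc t" using xt c unfolding Tc_def by auto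
    thus ?thesis using t unfolding KX_def by blast
  qed
qed

lemma lf_vecs: "x \<in> vecs (2*r) \<Longrightarrow> lf a vv x = lf a (2*r) x"
proof -
  assume x: "x \<in> vecs (2*r)"
  have "lf a vv x = (\<Sum>i<2*r. a i * x i)"
    unfolding lf_def
    by (rule sum.mono_neutral_right) (use x in \<open>auto simp: vecs_def vv_def\<close>)
  thus ?thesis by (simp add: lf_def)
qed

lemma lf_Tc:
  assumes t: "t < j" and x: "x \<in> Tc t"
  shows "lf a vv x = lf a (2*r) (resV x) + a (ee t) * x (ee t) + a (ff t) * x (ff t)"
proof -
  have "lf a vv x = (\<Sum>i\<in>{..<2*r} \<union> {ee t, ff t}. a i * x i)"
    unfolding lf_def
  proof (rule sum.mono_neutral_right)
    show "finite {..<vv}" by simp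
    show "{..<2*r} \<union> {ee t, ff t} \<subseteq> {..<vv}" using ee_ff(6,7)[OF t] by (auto simp: vv_def)
    show "\<forall>i\<in>{..<vv} - ({..<2*r} \<union> {ee t, ff t}). a i * x i = 0"
      using x unfolding Tc_def by auto
  qed
  also have "\<dots> = (\<Sum>i<2*r. a i * x i) + (\<Sum>i\<in>{ee t, ff t}. a i * x i)"
    by (rule sum.union_disjoint) (use ee_ff(4)[of t] ee_ff(5)[of t] in auto)
  also have "(\<Sum>i\<in>{ee t, ff t}. a i * x i) = a (ee t) * x (ee t) + a (ff t) * x (ff t)"
    using ee_ff(1) by simp
  also have "(\<Sum>i<2*r. a i * x i) = lf a (2*r) (resV x)"
    by (simp add: lf_def resV_def)
  finally show ?thesis by (simp add: add.assoc)
qed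

definition "Psi t = (\<lambda>((\<alpha>::'a, \<beta>::'a), s). (\<lambda>i. if i < 2*r then s i else if i = ee t then \<alpha> else if i = ff t then \<beta> else 0))"

lemma Tc_count:
  assumes t: "t < j"
  shows "card {x\<in>Tc t. Q ((x (ee t), x (ff t)), resV x)} =
         card (Sigma ((UNIV - {0}) \<times> (UNIV - {0})) (\<lambda>ab. {s\<in>S t. Q (ab, s)}))"
proof (rule bij_betw_same_card[of "\<lambda>x. ((x (ee t), x (ff t)), resV x)"],
       rule bij_betw_byWitness[where f'="Psi t"])
  have Sv: "s \<in> vecs (2*r)" if "s \<in> S t" for s using S_vecs[OF t] that by blast
  show "\<forall>x\<in>{x\<in>Tc t. Q ((x (ee t), x (ff t)), resV x)}. Psi t ((x (ee t), x (ff t)), resV x) = x"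
  proof
    fix x assume "x \<in> {x\<in>Tc t. Q ((x (ee t), x (ff t)), resV x)}"
    hence x: "x \<in> Tc t" by simp
    show "Psi t ((x (ee t), x (ff t)), resV x) = x"
    proof
      fix i show "Psi t ((x (ee t), x (ff t)), resV x) i = x i"
        using x ee_ff(1)[of t t] ee_ff(4)[of t] ee_ff(5)[of t] unfolding Psi_def Tc_def resV_def by auto
    qed
  qed
  show "\<forall>y\<in>Sigma ((UNIV - {0}) \<times> (UNIV - {0})) (\<lambda>ab. {s\<in>S t. Q (ab, s)}).
          (\<lambda>x. ((x (ee t), x (ff t)), resV x)) (Psi t y) = y"
  proof
    fix y assume y: "y \<in> Sigma ((UNIV - {0}) \<times> (UNIV - {0})) (\<lambda>ab. {s\<in>S t. Q (ab, s)})"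
    obtain \<alpha> \<beta> s where y': "y = ((\<alpha>, \<beta>), s)" by (metis prod.exhaust)
    have s: "s \<in> vecs (2*r)" using y y' Sv by auto
    have r1: "resV (Psi t y) = s" using s unfolding y' Psi_def resV_def vecs_def by (auto simp: fun_eq_iff)
    show "(\<lambda>x. ((x (ee t), x (ff t)), resV x)) (Psi t y) = y"
      unfolding r1 using ee_ff(1)[of t t] ee_ff(4)[of t] ee_ff(5)[of t] by (simp add: y' Psi_def)
  qed
  show "(\<lambda>x. ((x (ee t), x (ff t)), resV x)) ` {x\<in>Tc t. Q ((x (ee t), x (ff t)), resV x)}
          \<subseteq> Sigma ((UNIV - {0}) \<times> (UNIV - {0})) (\<lambda>ab. {s\<in>S t. Q (ab, s)})"
    unfolding Tc_def by auto
  show "Psi t ` Sigma ((UNIV - {0}) \<times> (UNIV - {0})) (\<lambda>ab. {s\<in>S t. Q (ab, s)})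
          \<subseteq> {x\<in>Tc t. Q ((x (ee t), x (ff t)), resV x)}"
  proof
    fix x assume "x \<in> Psi t ` Sigma ((UNIV - {0}) \<times> (UNIV - {0})) (\<lambda>ab. {s\<in>S t. Q (ab, s)})"
    then obtain \<alpha> \<beta> s where ab: "\<alpha> \<noteq> 0" "\<beta> \<noteq> 0" and s: "s \<in> S t" "Q ((\<alpha>, \<beta>), s)"
      and x: "x = Psi t ((\<alpha>, \<beta>), s)" by auto
    have sv: "s \<in> vecs (2*r)" using Sv s by blast
    have r1: "resV x = s" using sv unfolding x Psi_def resV_def vecs_def by (auto simp: fun_eq_iff)
    have xe: "x (ee t) = \<alpha>" "x (ff t) = \<beta>" using ee_ff(1)[of t t] ee_ff(4)[of t] ee_ff(5)[of t] by (simp_all add: x Psi_def)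
    have "\<forall>i. 2*r \<le> i \<longrightarrow> i \<noteq> ee t \<longrightarrow> i \<noteq> ff t \<longrightarrow> x i = 0" by (simp add: x Psi_def)
    thus "x \<in> {x\<in>Tc t. Q ((x (ee t), x (ff t)), resV x)}"
      using r1 xe ab s unfolding Tc_def by auto
  qed
qed

end


context geo
begin

lemma finite_KX: "finite KX"
  using cone_KX finite_vecs[of vv, where 'a='a] unfolding cone_def by (meson finite_subset)

lemma A0_Tc_disj: "t < j \<Longrightarrow> A0 \<inter> Tc t = {}"
proof -
  { fix x assume x: "x \<in> A0" "x \<in> Tc t"
    have "x (ee t) = 0" using x(1) ee_ff(4)[of t] unfolding A0_def vecs_def by blast
    moreover have "x (ee t) \<noteq> 0" using x(2) unfolding Tc_def by blast
    ultimately have False by simp }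
  thus ?thesis by blast
qed

lemma Tc_Tc_disj: "t \<noteq> t' \<Longrightarrow> Tc t \<inter> Tc t' = {}"
proof -
  assume tt: "t \<noteq> t'"
  { fix x assume x: "x \<in> Tc t" "x \<in> Tc t'"
    have "\<forall>i. 2*r \<le> i \<longrightarrow> i \<noteq> ee t' \<longrightarrow> i \<noteq> ff t' \<longrightarrow> x i = 0"
      using x(2) unfolding Tc_def by blast
    hence "x (ee t) = 0" using ee_ff(4)[of t] ee_ff(2)[OF tt] ee_ff(1)[of t t'] by blast
    moreover have "x (ee t) \<noteq> 0" using x(1) unfolding Tc_def by blast
    ultimately have False by simp }
  thus ?thesis by blast
qed

lemma KX_split:
  "card {x\<in>KX. P x} = card {x\<in>A0. P x} + (\<Sum>t<j. card {x\<in>Tc t. P x})"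
proof -
  have e: "{x\<in>KX. P x} = {x\<in>A0. P x} \<union> (\<Union>t<j. {x\<in>Tc t. P x})" unfolding KX_def by blast
  have fA: "finite {x\<in>A0. P x}"
    by (rule finite_subset[OF _ finite_KX]) (auto simp: KX_def)
  have fT1: "finite {x\<in>Tc t. P x}" if "t < j" for t
    by (rule finite_subset[OF _ finite_KX]) (use that in \<open>auto simp: KX_def\<close>)
  have fT: "finite (\<Union>t<j. {x\<in>Tc t. P x})" using fT1 by simp
  have d1: "{x\<in>A0. P x} \<inter> (\<Union>t<j. {x\<in>Tc t. P x}) = {}"
    using A0_Tc_disj by blast
  have "card {x\<in>KX. P x} = card {x\<in>A0. P x} + card (\<Union>t<j. {x\<in>Tc t. P x})"
    unfolding e by (rule card_Un_disjoint[OF fA fT d1])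
  also have "card (\<Union>t<j. {x\<in>Tc t. P x}) = (\<Sum>t<j. card {x\<in>Tc t. P x})"
  proof (rule card_UN_disjoint)
    show "finite {..<j}" by simp
    show "\<forall>t\<in>{..<j}. finite {x\<in>Tc t. P x}" using fT1 by simp
    show "\<forall>t\<in>{..<j}. \<forall>t'\<in>{..<j}. t \<noteq> t' \<longrightarrow> {x\<in>Tc t. P x} \<inter> {x\<in>Tc t'. P x} = {}"
      using Tc_Tc_disj by blast
  qed
  finally show ?thesis .
qed

lemma card_Tc: "t < j \<Longrightarrow> card (Tc t) = (CARD('a) - 1)^2 * CARD('a) ^ r"
proof -
  assume t: "t < j"
  have "card (Tc t) = card {x\<in>Tc t. (\<lambda>_. True) ((x (ee t), x (ff t)), resV x)}" by simp
  also have "\<dots> = card (Sigma ((UNIV - {0::'a}) \<times> (UNIV - {0::'a})) (\<lambda>ab. {s\<in>S t. True}))"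
    by (rule Tc_count[OF t])
  also have "\<dots> = card (((UNIV - {0::'a}) \<times> (UNIV - {0::'a})) \<times> S t)" by simp
  also have "\<dots> = (CARD('a) - 1)^2 * CARD('a) ^ r"
    by (simp add: card_cartesian_product S_card[OF t] card_Diff_singleton power2_eq_square)
  finally show ?thesis .
qed

lemma card_A0: "card A0 + j * (CARD('a) ^ r - 1) = CARD('a) ^ (2*r) - 1"
proof -
  have e: "vecs (2*r) - {\<lambda>i. 0} = A0 \<union> (\<Union>t<j. S t - {\<lambda>i. 0})"
    unfolding A0_def using S_vecs by auto
  have fV: "finite (vecs (2*r) :: (nat \<Rightarrow> 'a) set)" by (rule finite_vecs)
  have fA: "finite A0" using fV unfolding A0_def by simp
  have fU: "finite (\<Union>t<j. S t - {\<lambda>i. 0})" using finite_S by auto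
  have "card (vecs (2*r) - {\<lambda>i. 0 :: 'a}) = card A0 + card (\<Union>t<j. S t - {\<lambda>i. 0})"
    unfolding e by (rule card_Un_disjoint[OF fA fU]) (auto simp: A0_def)
  also have "card (\<Union>t<j. S t - {\<lambda>i. 0}) = (\<Sum>t<j. card (S t - {\<lambda>i. 0}))"
  proof (rule card_UN_disjoint)
    show "finite {..<j}" by simp
    show "\<forall>t\<in>{..<j}. finite (S t - {\<lambda>i. 0})" using finite_S by auto
    show "\<forall>t\<in>{..<j}. \<forall>t'\<in>{..<j}. t \<noteq> t' \<longrightarrow> (S t - {\<lambda>i. 0}) \<inter> (S t' - {\<lambda>i. 0}) = {}"
      using S_disj by blast
  qed
  also have "\<dots> = (\<Sum>t<j. CARD('a) ^ r - 1)"
    by (rule sum.cong) (simp_all add: card_Diff_singleton S0 S_card finite_S)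
  also have "\<dots> = j * (CARD('a) ^ r - 1)" by simp
  finally show ?thesis
    using card_vecs[of "2*r", where 'a='a] by (simp add: card_Diff_singleton fV subsp_vecs[unfolded subsp_def])
qed

lemma card_KX: "int (card KX) = int (CARD('a)) ^ (2*r) - 1 - int j * (int (CARD('a)) ^ r - 1)
                 + int j * (int (CARD('a)) - 1)^2 * int (CARD('a)) ^ r"
proof -
  have "card KX = card A0 + (\<Sum>t<j. card (Tc t))" using KX_split[of "\<lambda>_. True"] by simp
  also have "(\<Sum>t<j. card (Tc t)) = j * ((CARD('a) - 1)^2 * CARD('a) ^ r)"
    using card_Tc by simp
  finally have "card KX = card A0 + j * ((CARD('a) - 1)^2 * CARD('a) ^ r)" .
  moreover have "int (card A0) = int (CARD('a)) ^ (2*r) - 1 - int j * (int (CARD('a)) ^ r - 1)"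
  proof -
    have q0: "CARD('a) > 0" by (simp add: finite_UNIV_card_ge_0)
    have "int (card A0) + int j * int (CARD('a) ^ r - 1) = int (CARD('a) ^ (2*r) - 1)"
      using card_A0 by (metis of_nat_add of_nat_mult)
    moreover have "int (CARD('a) ^ r - 1) = int (CARD('a)) ^ r - 1" using q0 by (simp add: of_nat_diff)
    moreover have "int (CARD('a) ^ (2*r) - 1) = int (CARD('a)) ^ (2*r) - 1" using q0 by (simp add: of_nat_diff)
    ultimately have "int (card A0) + int j * (int (CARD('a)) ^ r - 1) = int (CARD('a)) ^ (2*r) - 1"
      by simp
    then show ?thesis by linarith
  qed
  moreover have "int (CARD('a) - 1) = int (CARD('a)) - 1"
    by (simp add: of_nat_diff finite_UNIV_card_ge_0 Suc_leI)
  ultimately show ?thesis by (simp add: algebra_simps)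
qed

end


context geo
begin

lemma lf_zero: "lf a n (\<lambda>i. 0) = 0" by (simp add: lf_def)

lemma NV_dvd: "CARD('a) ^ r dvd card {x \<in> vecs (2*r) :: (nat \<Rightarrow> 'a) set. lf a (2*r) x \<noteq> 0}"
proof -
  let ?N = "card {x \<in> vecs (2*r) :: (nat \<Rightarrow> 'a) set. lf a (2*r) x \<noteq> 0}"
  have "CARD('a) * ?N = (CARD('a) - 1) * card (vecs (2*r) :: (nat \<Rightarrow> 'a) set) \<or> ?N = 0"
    by (rule nonzero_count_mult[OF finite_vecs subsp_vecs])
  thus ?thesis
  proof
    assume h: "CARD('a) * ?N = (CARD('a) - 1) * card (vecs (2*r) :: (nat \<Rightarrow> 'a) set)"
    have e: "2*r = Suc (2*r - 1)" using r1 by simp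
    have "CARD('a) * ?N = CARD('a) * ((CARD('a) - 1) * CARD('a) ^ (2*r - 1))"
      using h unfolding card_vecs by (subst (asm) e) (simp add: mult_ac)
    hence "?N = (CARD('a) - 1) * CARD('a) ^ (2*r - 1)" by (simp add: finite_UNIV_card_ge_0)
    moreover have "CARD('a) ^ r dvd CARD('a) ^ (2*r - 1)" using r1 by (intro le_imp_power_dvd) simp
    ultimately show ?thesis by simp
  qed simp
qed

definition "Nt a t = card {s\<in>S t. lf a (2*r) s \<noteq> 0}"

lemma Nt_dvd: "t < j \<Longrightarrow> CARD('a) ^ r dvd CARD('a) * Nt a t"
proof -
  assume t: "t < j"
  have "CARD('a) * Nt a t = (CARD('a) - 1) * card (S t) \<or> Nt a t = 0"
    unfolding Nt_def by (rule nonzero_count_mult[OF finite_S[OF t] S_subsp[OF t]])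
  thus ?thesis using S_card[OF t] by auto
qed

lemma term_cong:
  assumes t: "t < j"
  shows "[card {s\<in>S t. lf a (2*r) s + c \<noteq> 0} = Nt a t] (mod CARD('a) ^ r)"
proof -
  have e: "{s\<in>S t. lf a (2*r) s + c \<noteq> 0} = {s\<in>S t. lf a (2*r) s \<noteq> - c}"
    by (auto simp: add_eq_0_iff2)
  have "card {s\<in>S t. lf a (2*r) s \<noteq> - c} = Nt a t \<or> (\<forall>s\<in>S t. lf a (2*r) s = 0)"
    unfolding Nt_def by (rule nonzero_count[OF finite_S[OF t] S_subsp[OF t]])
  thus ?thesis
  proof
    assume "card {s\<in>S t. lf a (2*r) s \<noteq> - c} = Nt a t"
    thus ?thesis unfolding e by simp
  next
    assume z: "\<forall>s\<in>S t. lf a (2*r) s = 0"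
    have "{s\<in>S t. lf a (2*r) s \<noteq> 0} = {}" using z by blast
    hence "Nt a t = 0" unfolding Nt_def by (metis card.empty)
    moreover have "card {s\<in>S t. lf a (2*r) s \<noteq> - c} = 0 \<or> card {s\<in>S t. lf a (2*r) s \<noteq> - c} = CARD('a) ^ r"
    proof (cases "c = 0")
      case True
      then have "{s\<in>S t. lf a (2*r) s \<noteq> - c} = {}" using z by auto
      then have "card {s\<in>S t. lf a (2*r) s \<noteq> - c} = 0" by (metis card.empty)
      thus ?thesis by (rule disjI1)
    next
      case False
      then have "{s\<in>S t. lf a (2*r) s \<noteq> - c} = S t" using z by auto
      then show ?thesis using S_card[OF t] by simp
    qed
    ultimately show ?thesis unfolding e by (auto simp: cong_def)
  qed
qed

lemma T_cong:
  assumes t: "t < j"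
  shows "[card {x\<in>Tc t. lf a vv x \<noteq> 0} = (CARD('a) - 1)^2 * Nt a t] (mod CARD('a) ^ r)"
proof -
  define Q where "Q = (\<lambda>((\<alpha>::'a, \<beta>::'a), s). lf a (2*r) s + (a (ee t) * \<alpha> + a (ff t) * \<beta>) \<noteq> 0)"
  have "{x\<in>Tc t. lf a vv x \<noteq> 0} = {x\<in>Tc t. Q ((x (ee t), x (ff t)), resV x)}"
    using lf_Tc[OF t] by (auto simp: Q_def add.assoc)
  hence "card {x\<in>Tc t. lf a vv x \<noteq> 0} =
         card (Sigma ((UNIV - {0}) \<times> (UNIV - {0})) (\<lambda>ab. {s\<in>S t. Q (ab, s)}))"
    using Tc_count[OF t, of Q] by simp
  also have "\<dots> = (\<Sum>ab\<in>(UNIV - {0}) \<times> (UNIV - {0}). card {s\<in>S t. Q (ab, s)})"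
    by (rule card_SigmaI) (simp_all add: finite_S[OF t])
  finally have e: "card {x\<in>Tc t. lf a vv x \<noteq> 0} =
     (\<Sum>ab\<in>(UNIV - {0::'a}) \<times> (UNIV - {0::'a}). card {s\<in>S t. Q (ab, s)})" .
  have "[(\<Sum>ab\<in>(UNIV - {0::'a}) \<times> (UNIV - {0::'a}). card {s\<in>S t. Q (ab, s)}) =
         (\<Sum>ab\<in>(UNIV - {0::'a}) \<times> (UNIV - {0::'a}). Nt a t)] (mod CARD('a) ^ r)"
  proof (rule cong_sum)
    fix ab :: "'a \<times> 'a"
    obtain \<alpha> \<beta> where ab: "ab = (\<alpha>, \<beta>)" by (metis prod.exhaust)
    have "{s\<in>S t. Q (ab, s)} = {s\<in>S t. lf a (2*r) s + (a (ee t) * \<alpha> + a (ff t) * \<beta>) \<noteq> 0}"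
      by (simp add: Q_def ab)
    thus "[card {s\<in>S t. Q (ab, s)} = Nt a t] (mod CARD('a) ^ r)"
      using term_cong[OF t] by simp
  qed
  also have "(\<Sum>ab\<in>(UNIV - {0::'a}) \<times> (UNIV - {0::'a}). Nt a t) = (CARD('a) - 1)^2 * Nt a t"
    by (simp add: card_cartesian_product card_Diff_singleton power2_eq_square)
  finally show ?thesis unfolding e .
qed

lemma A0_weight:
  "card {x\<in>A0. lf a vv x \<noteq> 0} + (\<Sum>t<j. Nt a t) = card {x \<in> vecs (2*r). lf a (2*r) x \<noteq> 0}"
proof -
  have e: "{x \<in> vecs (2*r). lf a (2*r) x \<noteq> 0} = {x\<in>A0. lf a vv x \<noteq> 0} \<union> (\<Union>t<j. {s\<in>S t. lf a (2*r) s \<noteq> 0})"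
  proof
    show "{x \<in> vecs (2*r). lf a (2*r) x \<noteq> 0} \<subseteq> {x\<in>A0. lf a vv x \<noteq> 0} \<union> (\<Union>t<j. {s\<in>S t. lf a (2*r) s \<noteq> 0})"
    proof
      fix x assume x: "x \<in> {x \<in> vecs (2*r). lf a (2*r) x \<noteq> 0}"
      have nz: "x \<noteq> (\<lambda>i. 0)" using x lf_zero by auto
      show "x \<in> {x\<in>A0. lf a vv x \<noteq> 0} \<union> (\<Union>t<j. {s\<in>S t. lf a (2*r) s \<noteq> 0})"
      proof (cases "\<exists>t<j. x \<in> S t")
        case True then show ?thesis using x by blast
      next
        case False
        then have "x \<in> A0" using x nz unfolding A0_def by blast
        moreover have "lf a vv x \<noteq> 0" using x lf_vecs[of x a] by simp
        ultimately show ?thesis by blast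
      qed
    qed
    show "{x\<in>A0. lf a vv x \<noteq> 0} \<union> (\<Union>t<j. {s\<in>S t. lf a (2*r) s \<noteq> 0}) \<subseteq> {x \<in> vecs (2*r). lf a (2*r) x \<noteq> 0}"
    proof
      fix x assume x: "x \<in> {x\<in>A0. lf a vv x \<noteq> 0} \<union> (\<Union>t<j. {s\<in>S t. lf a (2*r) s \<noteq> 0})"
      show "x \<in> {x \<in> vecs (2*r). lf a (2*r) x \<noteq> 0}"
      proof (cases "x \<in> A0")
        case True
        then have xv: "x \<in> vecs (2*r)" unfolding A0_def by blast
        have "lf a vv x \<noteq> 0" using x True unfolding A0_def by blast
        then have "lf a (2*r) x \<noteq> 0" using lf_vecs[OF xv, of a] by simp
        thus ?thesis using xv by blast
      next
        case False
        then obtain t where "t < j" "x \<in> S t" "lf a (2*r) x \<noteq> 0" using x by blast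
        thus ?thesis using S_vecs by blast
      qed
    qed
  qed
  have fV: "finite {x \<in> vecs (2*r) :: (nat \<Rightarrow> 'a) set. lf a (2*r) x \<noteq> 0}" using finite_vecs[of "2*r", where 'a='a] by simp
  have fA: "finite {x\<in>A0. lf a vv x \<noteq> 0}"
    by (rule finite_subset[OF _ fV]) (use e in blast)
  have fT1: "finite {s\<in>S t. lf a (2*r) s \<noteq> 0}" if "t < j" for t using finite_S[OF that] by simp
  have fT: "finite (\<Union>t<j. {s\<in>S t. lf a (2*r) s \<noteq> 0})" using fT1 by simp
  have d1: "{x\<in>A0. lf a vv x \<noteq> 0} \<inter> (\<Union>t<j. {s\<in>S t. lf a (2*r) s \<noteq> 0}) = {}"
    unfolding A0_def by blast
  have "card {x \<in> vecs (2*r). lf a (2*r) x \<noteq> 0} = card {x\<in>A0. lf a vv x \<noteq> 0} + card (\<Union>t<j. {s\<in>S t. lf a (2*r) s \<noteq> 0})"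
    unfolding e by (rule card_Un_disjoint[OF fA fT d1])
  also have "card (\<Union>t<j. {s\<in>S t. lf a (2*r) s \<noteq> 0}) = (\<Sum>t<j. card {s\<in>S t. lf a (2*r) s \<noteq> 0})"
  proof (rule card_UN_disjoint)
    show "finite {..<j}" by simp
    show "\<forall>t\<in>{..<j}. finite {s\<in>S t. lf a (2*r) s \<noteq> 0}" using fT1 by simp
    show "\<forall>t\<in>{..<j}. \<forall>t'\<in>{..<j}. t \<noteq> t' \<longrightarrow> {s\<in>S t. lf a (2*r) s \<noteq> 0} \<inter> {s\<in>S t'. lf a (2*r) s \<noteq> 0} = {}"
    proof (intro ballI impI)
      fix t t' assume tt: "t \<in> {..<j}" "t' \<in> {..<j}" "t \<noteq> t'"
      { fix s assume s: "s \<in> S t" "s \<in> S t'" "lf a (2*r) s \<noteq> 0"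
        have "s = (\<lambda>i. 0)" using S_disj[of t t' s] tt s by simp
        hence False using s(3) by (simp add: lf_def) }
      thus "{s\<in>S t. lf a (2*r) s \<noteq> 0} \<inter> {s\<in>S t'. lf a (2*r) s \<noteq> 0} = {}" by blast
    qed
  qed
  finally show ?thesis unfolding Nt_def by simp
qed

lemma weight_dvd: "CARD('a) ^ r dvd card {x\<in>KX. lf a vv x \<noteq> 0}"
proof -
  let ?q = "int (CARD('a))"
  let ?T = "\<lambda>t. card {x\<in>Tc t. lf a vv x \<noteq> 0}"
  let ?NV = "card {x \<in> vecs (2*r) :: (nat \<Rightarrow> 'a) set. lf a (2*r) x \<noteq> 0}"
  have W: "card {x\<in>KX. lf a vv x \<noteq> 0} = card {x\<in>A0. lf a vv x \<noteq> 0} + (\<Sum>t<j. ?T t)"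
    by (rule KX_split)
  have iW: "int (card {x\<in>KX. lf a vv x \<noteq> 0}) = int ?NV + (\<Sum>t<j. int (?T t) - int (Nt a t))"
  proof -
    have "int ?NV = int (card {x\<in>A0. lf a vv x \<noteq> 0}) + (\<Sum>t<j. int (Nt a t))"
      by (simp only: A0_weight[of a, symmetric] of_nat_add of_nat_sum)
    moreover have "int (card {x\<in>KX. lf a vv x \<noteq> 0}) = int (card {x\<in>A0. lf a vv x \<noteq> 0}) + (\<Sum>t<j. int (?T t))"
      by (simp only: W of_nat_add of_nat_sum)
    moreover have "(\<Sum>t<j. int (?T t) - int (Nt a t)) = (\<Sum>t<j. int (?T t)) - (\<Sum>t<j. int (Nt a t))"
      by (rule sum_subtractf)
    ultimately show ?thesis by linarith
  qed
  have dt: "int (CARD('a) ^ r) dvd int (?T t) - int (Nt a t)" if t: "t < j" for t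
  proof -
    have "[int (?T t) = int ((CARD('a) - 1)^2 * Nt a t)] (mod int (CARD('a) ^ r))"
      using T_cong[OF t, of a] by (simp only: cong_int_iff)
    hence d1: "int (CARD('a) ^ r) dvd int (?T t) - int ((CARD('a) - 1)^2 * Nt a t)"
      by (simp add: cong_iff_dvd_diff)
    have d2: "int (CARD('a) ^ r) dvd int (CARD('a) * Nt a t)"
      using Nt_dvd[OF t, of a] by (simp only: int_dvd_int_iff)
    have q1: "int (CARD('a) - 1) = ?q - 1" by (simp add: of_nat_diff finite_UNIV_card_ge_0 Suc_leI)
    have q2: "int ((CARD('a) - 1)^2 * Nt a t) = (?q - 1)^2 * int (Nt a t)"
      by (simp only: of_nat_mult of_nat_power q1)
    have q3: "int (CARD('a) * Nt a t) = ?q * int (Nt a t)" by (simp only: of_nat_mult)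
    have "(?q - 1)^2 * int (Nt a t) - int (Nt a t) = (?q - 2) * (?q * int (Nt a t))"
      by (simp add: power2_eq_square algebra_simps)
    hence "int ((CARD('a) - 1)^2 * Nt a t) - int (Nt a t) = (?q - 2) * int (CARD('a) * Nt a t)"
      by (simp only: q2 q3)
    hence eq: "int (?T t) - int (Nt a t) =
           (int (?T t) - int ((CARD('a) - 1)^2 * Nt a t)) + (?q - 2) * int (CARD('a) * Nt a t)"
      by linarith
    show ?thesis unfolding eq by (rule dvd_add[OF d1 dvd_mult[OF d2]])
  qed
  have "int (CARD('a) ^ r) dvd int ?NV" using NV_dvd[of a] by (simp only: int_dvd_int_iff)
  moreover have "int (CARD('a) ^ r) dvd (\<Sum>t<j. int (?T t) - int (Nt a t))"
    using dt by (intro dvd_sum) simp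
  ultimately have "int (CARD('a) ^ r) dvd int (card {x\<in>KX. lf a vv x \<noteq> 0})"
    unfolding iW by (rule dvd_add)
  thus ?thesis by (simp only: int_dvd_int_iff)
qed

end


lemma div_geom:
  fixes q :: int and m :: nat
  assumes "q \<noteq> 1"
  shows "(q ^ m - 1) div (q - 1) = (\<Sum>i<m. q ^ i)"
proof -
  have "q ^ m - 1 = (q - 1) * (\<Sum>i<m. q ^ i)" by (rule power_diff_1_eq)
  thus ?thesis using assms by simp
qed

context geo
begin

theorem geo_main:
  "\<exists>v. \<exists>C :: (nat \<Rightarrow> 'a) set set.
     divisible_pts v (CARD('a) ^ r) C \<and>
     int (card C) =
       (int CARD('a) ^ (2 * r) - 1) div (int CARD('a) - 1)
       + int j * ((int CARD('a) - 1) * int CARD('a) ^ r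
                  - (int CARD('a) ^ r - 1) div (int CARD('a) - 1))"
proof (intro exI conjI)
  show "divisible_pts vv (CARD('a) ^ r) (line ` KX)"
    by (rule cone_divisible[OF cone_KX weight_dvd])
  let ?q = "int CARD('a)"
  have c2: "CARD('a) \<ge> 2"
  proof -
    have "card {0, 1::'a} \<le> CARD('a)" by (rule card_mono) auto
    thus ?thesis by simp
  qed
  hence q1: "?q \<noteq> 1" "?q - 1 \<noteq> 0" by simp_all
  have e1: "(CARD('a) - 1) * card (line ` KX) = card KX" by (rule cone_card[OF cone_KX])
  have iq: "int (CARD('a) - 1) = ?q - 1" using c2 by (simp add: of_nat_diff)
  have e2: "(?q - 1) * int (card (line ` KX)) = int (card KX)"
    using arg_cong[OF e1, of int] iq by (simp only: of_nat_mult)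
  define G where "G = (\<lambda>m. (\<Sum>i<m. ?q ^ i))"
  have G: "?q ^ m - 1 = (?q - 1) * G m" for m unfolding G_def by (rule power_diff_1_eq)
  have D: "(?q ^ m - 1) div (?q - 1) = G m" for m unfolding G_def by (rule div_geom[OF q1(1)])
  have "(?q - 1) * ((?q ^ (2 * r) - 1) div (?q - 1) + int j * ((?q - 1) * ?q ^ r - (?q ^ r - 1) div (?q - 1)))
        = (?q - 1) * G (2*r) + int j * (?q - 1)^2 * ?q ^ r - int j * ((?q - 1) * G r)"
    unfolding D by (simp add: algebra_simps power2_eq_square)
  also have "\<dots> = ?q ^ (2*r) - 1 - int j * (?q ^ r - 1) + int j * (?q - 1)^2 * ?q ^ r"
    unfolding G[symmetric] by simp
  also have "\<dots> = int (card KX)" by (rule card_KX[symmetric])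
  also have "\<dots> = (?q - 1) * int (card (line ` KX))" by (rule e2[symmetric])
  finally have "(?q - 1) * ((?q ^ (2 * r) - 1) div (?q - 1) + int j * ((?q - 1) * ?q ^ r - (?q ^ r - 1) div (?q - 1)))
     = (?q - 1) * int (card (line ` KX))" .
  hence "(?q ^ (2 * r) - 1) div (?q - 1) + int j * ((?q - 1) * ?q ^ r - (?q ^ r - 1) div (?q - 1))
     = int (card (line ` KX))"
    by (rule mult_left_cancel[OF q1(2), THEN iffD1])
  thus "int (card (line ` KX)) =
     (?q ^ (2 * r) - 1) div (?q - 1) + int j * ((?q - 1) * ?q ^ r - (?q ^ r - 1) div (?q - 1))"
    by (rule sym)
qed

end


lemma spread_family:
  assumes r: "r \<ge> 1" and j: "j \<le> CARD('a::{finite,field}) ^ r + 1"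
  shows "\<exists>S :: nat \<Rightarrow> (nat \<Rightarrow> 'a) set. geo r j S"
proof -
  obtain K :: "'a alg_closure set" and \<beta> where Kmul: "\<forall>x\<in>K. \<forall>y\<in>K. x * y \<in> K"
    and bij: "bij_betw (\<lambda>c. \<Sum>i<r. to_ac (c i) * \<beta> i) {c :: nat \<Rightarrow> 'a. \<forall>i\<ge>r. c i = 0} K"
    using field_ext[OF r] by blast
  define phi where "phi = (\<lambda>c :: nat \<Rightarrow> 'a. \<Sum>i<r. to_ac (c i) * \<beta> i)"
  have bij': "bij_betw phi (vecs r) K" using bij unfolding phi_def vecs_def by simp
  have inj: "inj_on phi (vecs r)" using bij' by (rule bij_betw_imp_inj_on)
  have phiK: "c \<in> vecs r \<Longrightarrow> phi c \<in> K" for c using bij_betwE[OF bij'] by blast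
  have surj: "y \<in> K \<Longrightarrow> \<exists>c\<in>vecs r. phi c = y" for y using bij_betw_imp_surj_on[OF bij'] by blast
  have phi_add: "phi (\<lambda>i. c i + d i) = phi c + phi d" for c d
    by (simp add: phi_def distrib_right sum.distrib)
  have phi_sm: "phi (\<lambda>i. a * c i) = to_ac a * phi c" for a c
    by (simp add: phi_def sum_distrib_left mult_ac)
  have phi0: "phi (\<lambda>i. 0) = 0" by (simp add: phi_def)
  have phi_eq0: "c \<in> vecs r \<Longrightarrow> phi c = 0 \<Longrightarrow> c = (\<lambda>i. 0)" for c
  proof -
    assume c: "c \<in> vecs r" "phi c = 0"
    have z: "(\<lambda>i. 0) \<in> (vecs r :: (nat \<Rightarrow> 'a) set)" by (simp add: vecs_def)
    show "c = (\<lambda>i. 0)" using c(2) phi0 by (intro inj_onD[OF inj _ c(1) z]) simp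
  qed
  define fstb where "fstb = (\<lambda>x :: nat \<Rightarrow> 'a. (\<lambda>i. if i < r then x i else 0))"
  define sndb where "sndb = (\<lambda>x :: nat \<Rightarrow> 'a. (\<lambda>i. if i < r then x (r + i) else 0))"
  define comb where "comb = (\<lambda>(c :: nat \<Rightarrow> 'a) d. (\<lambda>i. if i < r then c i else if i < 2*r then d (i - r) else 0))"
  have fv: "fstb x \<in> vecs r" "sndb x \<in> vecs r" for x by (simp_all add: fstb_def sndb_def vecs_def)
  have recon: "x = comb (fstb x) (sndb x)" if "x \<in> vecs (2*r)" for x
    using that by (auto simp: comb_def fstb_def sndb_def vecs_def fun_eq_iff)
  have fc: "fstb (comb c d) = c" if "c \<in> vecs r" for c d
    using that by (auto simp: comb_def fstb_def vecs_def fun_eq_iff)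
  have sc: "sndb (comb c d) = d" if "d \<in> vecs r" for c d
    using that by (auto simp: comb_def sndb_def vecs_def fun_eq_iff)
  have cv: "comb c d \<in> vecs (2*r)" for c d by (simp add: comb_def vecs_def)
  have fadd: "fstb (\<lambda>i. x i + y i) = (\<lambda>i. fstb x i + fstb y i)" for x y by (simp add: fstb_def fun_eq_iff)
  have sadd: "sndb (\<lambda>i. x i + y i) = (\<lambda>i. sndb x i + sndb y i)" for x y by (simp add: sndb_def fun_eq_iff)
  have fsm: "fstb (\<lambda>i. a * x i) = (\<lambda>i. a * fstb x i)" for a x by (simp add: fstb_def fun_eq_iff)
  have ssm: "sndb (\<lambda>i. a * x i) = (\<lambda>i. a * sndb x i)" for a x by (simp add: sndb_def fun_eq_iff)
  define Sp where "Sp = (\<lambda>w. case w of None \<Rightarrow> {x \<in> vecs (2*r). fstb x = (\<lambda>i. 0)}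
                               | Some w \<Rightarrow> {x \<in> vecs (2*r). phi (sndb x) = w * phi (fstb x)})"
  have cardK: "card K = CARD('a) ^ r"
    using bij_betw_same_card[OF bij'] card_vecs[of r, where 'a='a] by simp
  have "card {..<j} \<le> card (insert None (Some ` K))"
  proof -
    have fK: "finite K" by (rule card_ge_0_finite) (simp add: cardK finite_UNIV_card_ge_0)
    have "card (insert None (Some ` K)) = card K + 1"
      using fK by (simp add: card_image)
    thus ?thesis using j cardK by simp
  qed
  then obtain g where g: "g ` {..<j} \<subseteq> insert None (Some ` K)" "inj_on g {..<j}"
  proof -
    have fK: "finite K" by (rule card_ge_0_finite) (simp add: cardK finite_UNIV_card_ge_0)
    show ?thesis using card_le_inj[of "{..<j}" "insert None (Some ` K)"] fK \<open>card {..<j} \<le> _\<close> that by blast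
  qed
  define S where "S = (\<lambda>t. Sp (g t))"
  have Sp_sub: "Sp w \<subseteq> vecs (2*r)" for w by (cases w) (auto simp: Sp_def)
  have Sp_subsp: "subsp (Sp w)" for w
  proof (cases w)
    case None then show ?thesis
      by (simp add: Sp_def subsp_def vecs_def fstb_def fun_eq_iff)
  next
    case (Some w')
    have SpS: "Sp w = {x \<in> vecs (2*r). phi (sndb x) = w' * phi (fstb x)}" using Some by (simp add: Sp_def)
    show ?thesis unfolding subsp_def SpS
    proof (intro conjI ballI allI)
      show "(\<lambda>i. 0) \<in> {x \<in> vecs (2*r). phi (sndb x) = w' * phi (fstb x)}"
        by (simp add: vecs_def fstb_def sndb_def phi0)
      fix x y assume x: "x \<in> {x \<in> vecs (2*r). phi (sndb x) = w' * phi (fstb x)}"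
      { assume y: "y \<in> {x \<in> vecs (2*r). phi (sndb x) = w' * phi (fstb x)}"
        show "(\<lambda>i. x i + y i) \<in> {x \<in> vecs (2*r). phi (sndb x) = w' * phi (fstb x)}"
          using x y by (simp add: vecs_def fadd sadd phi_add distrib_left) }
      fix c
      show "(\<lambda>i. c * x i) \<in> {x \<in> vecs (2*r). phi (sndb x) = w' * phi (fstb x)}"
        using x by (simp add: vecs_def fsm ssm phi_sm mult_ac)
    qed
  qed
  have Sp_card: "w \<in> insert None (Some ` K) \<Longrightarrow> card (Sp w) = CARD('a) ^ r" for w
  proof (cases w)
    case None
    have "bij_betw sndb (Sp w) (vecs r)"
    proof (rule bij_betw_imageI)
      show "inj_on sndb (Sp w)"
      proof (rule inj_onI)
        fix x y assume x: "x \<in> Sp w" and y: "y \<in> Sp w" and e: "sndb x = sndb y"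
        have "x = comb (fstb x) (sndb x)" "y = comb (fstb y) (sndb y)"
          using x y Sp_sub by (auto intro: recon)
        moreover have "fstb x = fstb y" using x y None by (simp add: Sp_def)
        ultimately show "x = y" using e by simp
      qed
      show "sndb ` Sp w = vecs r"
      proof
        show "sndb ` Sp w \<subseteq> vecs r" using fv by auto
        show "vecs r \<subseteq> sndb ` Sp w"
        proof
          fix d :: "nat \<Rightarrow> 'a" assume d: "d \<in> vecs r"
          have "comb (\<lambda>i. 0) d \<in> Sp w" using None cv fc[of "\<lambda>i. 0"] by (simp add: Sp_def vecs_def)
          moreover have "sndb (comb (\<lambda>i. 0) d) = d" using sc d by simp
          ultimately show "d \<in> sndb ` Sp w" by (metis image_eqI)
        qed
      qed
    qed
    thus ?thesis using card_vecs[of r, where 'a='a] by (simp add: bij_betw_same_card)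
  next
    case (Some w')
    assume wK: "w \<in> insert None (Some ` K)"
    hence w'K: "w' \<in> K" using Some by auto
    have "bij_betw fstb (Sp w) (vecs r)"
    proof (rule bij_betw_imageI)
      show "inj_on fstb (Sp w)"
      proof (rule inj_onI)
        fix x y assume x: "x \<in> Sp w" and y: "y \<in> Sp w" and e: "fstb x = fstb y"
        have "x = comb (fstb x) (sndb x)" "y = comb (fstb y) (sndb y)"
          using x y Sp_sub by (auto intro: recon)
        moreover have "phi (sndb x) = phi (sndb y)" using x y e Some by (simp add: Sp_def)
        hence "sndb x = sndb y" by (rule inj_onD[OF inj _ fv(2) fv(2)])
        ultimately show "x = y" using e by simp
      qed
      show "fstb ` Sp w = vecs r"
      proof
        show "fstb ` Sp w \<subseteq> vecs r" using fv by auto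
        show "vecs r \<subseteq> fstb ` Sp w"
        proof
          fix c :: "nat \<Rightarrow> 'a" assume c: "c \<in> vecs r"
          have "w' * phi c \<in> K" using Kmul w'K phiK[OF c] by blast
          then obtain d where d: "d \<in> vecs r" "phi d = w' * phi c" using surj by blast
          have "comb c d \<in> Sp w" using Some cv fc[OF c] sc[OF d(1)] d(2) by (simp add: Sp_def)
          moreover have "fstb (comb c d) = c" using fc c by simp
          ultimately show "c \<in> fstb ` Sp w" by (metis image_eqI)
        qed
      qed
    qed
    thus ?thesis using card_vecs[of r, where 'a='a] by (simp add: bij_betw_same_card)
  qed
  have zero_of: "x = (\<lambda>i. 0)" if "x \<in> vecs (2*r)" "fstb x = (\<lambda>i. 0)" "phi (sndb x) = 0" for x
  proof -
    have "sndb x = (\<lambda>i. 0)" using phi_eq0[OF fv(2)] that(3) by simp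
    hence "x = comb (\<lambda>i. 0) (\<lambda>i. 0)" using recon[OF that(1)] that(2) by simp
    thus ?thesis by (simp add: comb_def fun_eq_iff)
  qed
  have Sp_disj: "x = (\<lambda>i. 0)" if ne0: "w1 \<noteq> w2" and xs1: "x \<in> Sp w1" and xs2: "x \<in> Sp w2" for w1 w2 x
  proof (cases w1)
    case None
    then obtain w2' where w2: "w2 = Some w2'" using ne0 by (cases w2) auto
    have "fstb x = (\<lambda>i. 0)" "x \<in> vecs (2*r)" using xs1 None by (auto simp: Sp_def)
    moreover have "phi (sndb x) = 0" using xs2 w2 calculation(1) by (simp add: Sp_def phi0)
    ultimately show ?thesis using zero_of by blast
  next
    case (Some w1')
    show ?thesis
    proof (cases w2)
      case None
      have "fstb x = (\<lambda>i. 0)" "x \<in> vecs (2*r)" using xs2 None by (auto simp: Sp_def)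
      moreover have "phi (sndb x) = 0" using xs1 Some calculation(1) by (simp add: Sp_def phi0)
      ultimately show ?thesis using zero_of by blast
    next
      case (Some w2')
      have x1: "x \<in> vecs (2*r)" "phi (sndb x) = w1' * phi (fstb x)" using xs1 \<open>w1 = Some w1'\<close> by (auto simp: Sp_def)
      have x2: "phi (sndb x) = w2' * phi (fstb x)" using xs2 Some by (auto simp: Sp_def)
      have ne: "w1' \<noteq> w2'" using ne0 \<open>w1 = Some w1'\<close> Some by simp
      have "(w1' - w2') * phi (fstb x) = w1' * phi (fstb x) - w2' * phi (fstb x)" by (rule left_diff_distrib)
      also have "\<dots> = 0" unfolding x1(2)[symmetric] x2[symmetric] by simp
      finally have "(w1' - w2') * phi (fstb x) = 0" .
      hence "phi (fstb x) = 0" using ne by simp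
      hence f0: "fstb x = (\<lambda>i. 0)" using phi_eq0[OF fv(1)] by simp
      have "phi (sndb x) = 0" using x1(2) f0 phi0 by simp
      thus ?thesis using zero_of[OF x1(1) f0] by simp
    qed
  qed
  have "geo r j S"
  proof
    show "r \<ge> 1" by (rule r)
    show "S t \<subseteq> vecs (2*r)" if "t < j" for t unfolding S_def by (rule Sp_sub)
    show "subsp (S t)" if "t < j" for t unfolding S_def by (rule Sp_subsp)
    show "card (S t) = CARD('a) ^ r" if "t < j" for t unfolding S_def using g(1) that by (intro Sp_card) auto
    show "x = (\<lambda>i. 0)" if "t < j" "t' < j" "t \<noteq> t'" "x \<in> S t" "x \<in> S t'" for t t' x
    proof -
      have "g t \<noteq> g t'" using g(2) that(1-3) by (auto dest: inj_onD)
      thus ?thesis using Sp_disj that(4,5) unfolding S_def by blast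
    qed
  qed
  thus ?thesis by blast
qed

theorem corollary4p17:
  fixes r j :: nat
  assumes "r \<ge> 1" and "j \<le> CARD('a::{finite,field}) ^ r + 1"
  shows "\<exists>v. \<exists>C :: (nat \<Rightarrow> 'a) set set.
           divisible_pts v (CARD('a) ^ r) C \<and>
           int (card C) =
             (int CARD('a) ^ (2 * r) - 1) div (int CARD('a) - 1)
             + int j * ((int CARD('a) - 1) * int CARD('a) ^ r
                        - (int CARD('a) ^ r - 1) div (int CARD('a) - 1))"
proof -
  obtain S :: "nat \<Rightarrow> (nat \<Rightarrow> 'a) set" where "geo r j S" using spread_family[OF assms] by blast
  then interpret geo r j S .
  show ?thesis by (rule geo_main)
qed


end
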